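(* Let $m\ge 1$, let $h$ be an $m$-times weak Lefschetz O-sequence, $n=h_1$, $R=K[x_1,\ldots,x_n]$. Then $R/\mathcal{W}_m(h)$ has $m$-times the weak Lefschetz property.
   Context: $K$ is an infinite field of characteristic $0$. An O-sequence is a sequence of non-negative integers that is the Hilbert function of some standard graded $K$-algebra; a finite O-sequence $h:1=h_0,\ldots,h_s$, $h_s\ne0$, has length $s$. $h$ is unimodal if $h_0<h_1<\cdots<h_k\ge h_{k+1}\ge\cdots\ge h_s$ for some $k$; then $\Delta h:=1,h_1-h_0,\ldots,h_k-h_{k-1}$. An O-sequence is $0$-times weak Lefschetz by convention; $h$ is an $m$-times weak Lefschetz O-sequence if it is unimodal and $\Delta h$ is an $(m-1)$-times weak Lefschetz O-sequence. Monomials are ordered with $x_1>\cdots>x_n$, rev-lex = degree reverse lexicographic order. Define $\mathcal{W}_0(g)=\mathrm{Lex}(g)$, the lex-segment ideal in $K[x_1,\ldots,x_{g_1}]$ with Hilbert function $g$ (degree-$d$ component spanned by the largest monomials of degree $d$ in lex order, as many as needed). For $m\ge1$, with $R'=K[x_1,\ldots,x_{n-1}]$: start with $I=\mathcal{W}_{m-1}(\Delta h)R$ (ideal of $R'$ extended to $R$); while the Hilbert function of $R/I$ differs from $h$, let $d_0$ be the least degree where they differ, $r=\dim_K(R/I)_{d_0}-h_{d_0}>0$, and add to $I$ the $r$ largest rev-lex monomials of degree $d_0$ not in $I$. The procedure terminates with an ideal $\mathcal{W}_m(h)$ such that $R/\mathcal{W}_m(h)$ has Hilbert function $h$. A standard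 graded algebra $A$ (Artinian in the paper) has the weak Lefschetz property (WLP) if there is $\ell\in A_1$ (a weak Lefschetz element, WLE) such that multiplication $\times\ell:A_d\to A_{d+1}$ has maximal rank for all $d\ge1$; $A$ has $m$-times the WLP if there are $\ell_1,\ldots,\ell_m\in A_1$ with $\ell_1$ a WLE for $A$ and $\ell_i$ a WLE for $A/(\ell_1,\ldots,\ell_{i-1})$ for $i=2,\ldots,m$. *)

theory Defs
  imports Complex_Main "HOL-Library.Poly_Mapping"
begin

text \<open>Monomials are exponent vectors (nat =>0 nat); variable x_i has index i (i >= 1).
  Polynomials with coefficients in 'k are finitely supported maps from monomials to 'k.\<close>

type_synonym 'k mpoly = "(nat \<Rightarrow>\<^sub>0 nat) \<Rightarrow>\<^sub>0 'k"

definition mdeg :: "(nat \<Rightarrow>\<^sub>0 nat) \<Rightarrow> nat" where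
  "mdeg a = (\<Sum>i\<in>Poly_Mapping.keys a. Poly_Mapping.lookup a i)"

definition Mon :: "nat \<Rightarrow> nat \<Rightarrow> (nat \<Rightarrow>\<^sub>0 nat) set" where
  "Mon n d = {a. Poly_Mapping.keys a \<subseteq> {1..n} \<and> mdeg a = d}"

definition monom :: "(nat \<Rightarrow>\<^sub>0 nat) \<Rightarrow> 'k::zero_neq_one mpoly" where
  "monom a = Poly_Mapping.single a 1"

definition polyring :: "nat \<Rightarrow> 'k::zero mpoly set" where
  "polyring n = {f. \<forall>a\<in>Poly_Mapping.keys f. Poly_Mapping.keys a \<subseteq> {1..n}}"

definition hom :: "nat \<Rightarrow> nat \<Rightarrow> 'k::zero mpoly set" where
  "hom n d = {f. Poly_Mapping.keys f \<subseteq> Mon n d}"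

definition is_ideal :: "nat \<Rightarrow> 'k::comm_ring_1 mpoly set \<Rightarrow> bool" where
  "is_ideal n I \<longleftrightarrow> I \<subseteq> polyring n \<and> 0 \<in> I \<and> (\<forall>f\<in>I. \<forall>g\<in>I. f + g \<in> I)
     \<and> (\<forall>r\<in>polyring n. \<forall>f\<in>I. r * f \<in> I)"

definition ideal_gen :: "nat \<Rightarrow> 'k::comm_ring_1 mpoly set \<Rightarrow> 'k mpoly set" where
  "ideal_gen n G = \<Inter>{I. is_ideal n I \<and> G \<subseteq> I}"

definition kscale :: "'k::field \<Rightarrow> 'k mpoly \<Rightarrow> 'k mpoly" where
  "kscale c f = Poly_Mapping.map ((*) c) f"

definition dimK :: "'k::field mpoly set \<Rightarrow> nat" where
  "dimK S = vector_space.dim kscale S"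

definition hilb :: "nat \<Rightarrow> 'k::field mpoly set \<Rightarrow> nat \<Rightarrow> nat" where
  "hilb n I d = dimK (hom n d :: 'k mpoly set) - dimK (I \<inter> hom n d)"

text \<open>A finite sequence h_0,...,h_s is a list of length s+1; it is extended by 0.\<close>
definition hv :: "nat list \<Rightarrow> nat \<Rightarrow> nat" where
  "hv h d = (if d < length h then h ! d else 0)"

text \<open>O-sequence: Hilbert function of a standard graded K-algebra R/I, I a homogeneous
  ideal (generated by homogeneous polynomials) of some K[x_1,...,x_n];
  finite: 1 = h_0,...,h_s with h_s nonzero and zero afterwards.\<close>
definition Oseq :: "'k::field itself \<Rightarrow> nat list \<Rightarrow> bool" where
  "Oseq _ h \<longleftrightarrow> h \<noteq> [] \<and> h ! 0 = 1 \<and> last h \<noteq> 0 \<and>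
     (\<exists>n (G :: 'k mpoly set). G \<subseteq> (\<Union>d. hom n d) \<and>
        (\<forall>d. hilb n (ideal_gen n G) d = hv h d))"

definition unimodal_at :: "nat list \<Rightarrow> nat \<Rightarrow> bool" where
  "unimodal_at h k \<longleftrightarrow> k < length h \<and> (\<forall>i<k. h ! i < h ! Suc i) \<and>
     (\<forall>i. k \<le> i \<longrightarrow> Suc i < length h \<longrightarrow> h ! Suc i \<le> h ! i)"

definition unimodal :: "nat list \<Rightarrow> bool" where
  "unimodal h \<longleftrightarrow> (\<exists>k. unimodal_at h k)"

definition Delta :: "nat list \<Rightarrow> nat list" where
  "Delta h = (let k = (THE k. unimodal_at h k) in
      1 # map (\<lambda>i. h ! i - h ! (i - 1)) [1..<Suc k])"

fun WLseq :: "'k::field itself \<Rightarrow> nat \<Rightarrow> nat list \<Rightarrow> bool" where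
  "WLseq T 0 h = Oseq T h"
| "WLseq T (Suc m) h = (Oseq T h \<and> unimodal h \<and> WLseq T m (Delta h))"

definition lex_gt :: "(nat \<Rightarrow>\<^sub>0 nat) \<Rightarrow> (nat \<Rightarrow>\<^sub>0 nat) \<Rightarrow> bool" where
  "lex_gt a b \<longleftrightarrow> (\<exists>i. Poly_Mapping.lookup b i < Poly_Mapping.lookup a i \<and> (\<forall>j<i. Poly_Mapping.lookup a j = Poly_Mapping.lookup b j))"

definition revlex_gt :: "(nat \<Rightarrow>\<^sub>0 nat) \<Rightarrow> (nat \<Rightarrow>\<^sub>0 nat) \<Rightarrow> bool" where
  "revlex_gt a b \<longleftrightarrow> mdeg b < mdeg a \<or>
     (mdeg a = mdeg b \<and> (\<exists>i. Poly_Mapping.lookup a i < Poly_Mapping.lookup b i \<and> (\<forall>j>i. Poly_Mapping.lookup a j = Poly_Mapping.lookup b j)))"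

definition top :: "('a \<Rightarrow> 'a \<Rightarrow> bool) \<Rightarrow> nat \<Rightarrow> 'a set \<Rightarrow> 'a set" where
  "top gt r S = {a\<in>S. card {b\<in>S. gt b a} < r}"

text \<open>Lex(g): lex-segment ideal in K[x_1,...,x_(g_1)] with Hilbert function g.\<close>
definition Lex :: "nat list \<Rightarrow> 'k::field mpoly set" where
  "Lex g = (let N = hv g 1 in
     ideal_gen N (\<Union>d. monom ` top lex_gt (card (Mon N d) - hv g d) (Mon N d)))"

fun wstage :: "nat \<Rightarrow> nat list \<Rightarrow> 'k::field mpoly set \<Rightarrow> nat \<Rightarrow> 'k mpoly set" where
  "wstage n h I0 0 = I0"
| "wstage n h I0 (Suc d) = (let I = wstage n h I0 d in
     ideal_gen n (I \<union> monom ` top revlex_gt (hilb n I d - hv h d)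
                                    {a\<in>Mon n d. monom a \<notin> I}))"

fun W :: "nat \<Rightarrow> nat list \<Rightarrow> 'k::field mpoly set" where
  "W 0 g = Lex g"
| "W (Suc m) h = (let n = hv h 1 in
     (\<Union>d. wstage n h (ideal_gen n (W m (Delta h))) d))"

text \<open>Multiplication by the class of the linear form L, (R/I)_d -> (R/I)_(d+1),
  has maximal rank, i.e. is injective or surjective.\<close>
definition maxrank :: "nat \<Rightarrow> 'k::field mpoly set \<Rightarrow> 'k mpoly \<Rightarrow> nat \<Rightarrow> bool" where
  "maxrank n I L d \<longleftrightarrow>
     (\<forall>f\<in>hom n d. L * f \<in> I \<longrightarrow> f \<in> I) \<or>
     (\<forall>g\<in>hom n (Suc d). \<exists>f\<in>hom n d. g - L * f \<in> I)"

definition WLE :: "nat \<Rightarrow> 'k::field mpoly set \<Rightarrow> 'k mpoly \<Rightarrow> bool" where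
  "WLE n I L \<longleftrightarrow> L \<in> hom n 1 \<and> (\<forall>d\<ge>1. maxrank n I L d)"

definition mWLP :: "nat \<Rightarrow> 'k::field mpoly set \<Rightarrow> nat \<Rightarrow> bool" where
  "mWLP n I m \<longleftrightarrow> (\<exists>Ls. length Ls = m \<and>
     (\<forall>i<m. WLE n (ideal_gen n (I \<union> set (take i Ls))) (Ls ! i)))"

end

theory Submission
  imports Defs
begin

abbreviation lk :: "('a \<Rightarrow>\<^sub>0 'b::zero) \<Rightarrow> 'a \<Rightarrow> 'b" where "lk \<equiv> Poly_Mapping.lookup"
abbreviation ks :: "('a \<Rightarrow>\<^sub>0 'b::zero) \<Rightarrow> 'a set" where "ks \<equiv> Poly_Mapping.keys"
abbreviation sg :: "'a \<Rightarrow> 'b \<Rightarrow> ('a \<Rightarrow>\<^sub>0 'b::zero)" where "sg \<equiv> Poly_Mapping.single"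

definition Mons :: "nat \<Rightarrow> (nat \<Rightarrow>\<^sub>0 nat) set" where
  "Mons n = {a. ks a \<subseteq> {1..n}}"

definition IU :: "(nat \<Rightarrow>\<^sub>0 nat) set \<Rightarrow> 'k::zero mpoly set" where
  "IU U = {f. ks f \<subseteq> U}"

definition dvm :: "(nat \<Rightarrow>\<^sub>0 nat) \<Rightarrow> (nat \<Rightarrow>\<^sub>0 nat) \<Rightarrow> bool" where
  "dvm s a \<longleftrightarrow> (\<forall>i. lk s i \<le> lk a i)"

definition upc :: "nat \<Rightarrow> (nat \<Rightarrow>\<^sub>0 nat) set \<Rightarrow> bool" where
  "upc n U \<longleftrightarrow> U \<subseteq> Mons n \<and> (\<forall>a\<in>U. \<forall>c\<in>Mons n. a + c \<in> U)"

definition up :: "nat \<Rightarrow> (nat \<Rightarrow>\<^sub>0 nat) set \<Rightarrow> (nat \<Rightarrow>\<^sub>0 nat) set" where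
  "up n S = {a\<in>Mons n. \<exists>s\<in>S. dvm s a}"

section \<open>Monomials\<close>

lemma mdeg_sum: "finite F \<Longrightarrow> ks a \<subseteq> F \<Longrightarrow> mdeg a = (\<Sum>i\<in>F. lk a i)"
  unfolding mdeg_def
  by (rule sum.mono_neutral_left) (auto simp: in_keys_iff)

lemma mdeg_add: "mdeg (a + b) = mdeg a + mdeg b"
proof -
  let ?F = "ks a \<union> ks b"
  have "mdeg (a + b) = (\<Sum>i\<in>?F. lk (a+b) i)"
    using keys_add[of a b] by (intro mdeg_sum) auto
  also have "\<dots> = (\<Sum>i\<in>?F. lk a i) + (\<Sum>i\<in>?F. lk b i)"
    by (simp add: lookup_add sum.distrib)
  also have "\<dots> = mdeg a + mdeg b"
    by (subst (1 2) mdeg_sum[of ?F]) auto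
  finally show ?thesis .
qed

lemma mdeg_single [simp]: "mdeg (sg i k) = k"
  unfolding mdeg_def by (cases "k = 0") auto

lemma mdeg_zero [simp]: "mdeg 0 = 0"
  unfolding mdeg_def by simp

lemma lk_le_mdeg: "lk a i \<le> mdeg a"
proof (cases "i \<in> ks a")
  case True
  then show ?thesis unfolding mdeg_def
    by (metis finite_keys member_le_sum zero_le)
next
  case False then show ?thesis by (simp add: in_keys_iff)
qed

lemma dvm_refl [simp]: "dvm a a" by (simp add: dvm_def)

lemma dvm_decomp: "dvm s a \<Longrightarrow> a = s + (a - s)"
  by (rule poly_mapping_eqI) (auto simp: dvm_def lookup_add lookup_minus)

lemma keys_minus_nat: "ks (a - s) \<subseteq> ks (a :: nat \<Rightarrow>\<^sub>0 nat)"
  by (auto simp: in_keys_iff lookup_minus)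

lemma mdeg_mono: "dvm s a \<Longrightarrow> mdeg s \<le> mdeg a"
  by (metis dvm_decomp mdeg_add le_add1)

lemma dvm_add_right: "dvm s (s + c)"
  by (simp add: dvm_def lookup_add)

lemma Mons_add: "a \<in> Mons n \<Longrightarrow> c \<in> Mons n \<Longrightarrow> a + c \<in> Mons n"
  using keys_add[of a c] by (auto simp: Mons_def)

lemma Mon_Mons: "a \<in> Mon n d \<Longrightarrow> a \<in> Mons n"
  by (simp add: Mon_def Mons_def)

lemma finite_Mon: "finite (Mon n d)"
proof -
  let ?g = "\<lambda>a::nat \<Rightarrow>\<^sub>0 nat. map (lk a) [1..<Suc n]"
  have inj: "inj_on ?g (Mon n d)"
  proof (rule inj_onI)
    fix a b assume a: "a \<in> Mon n d" and b: "b \<in> Mon n d" and e: "?g a = ?g b"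
    show "a = b"
    proof (rule poly_mapping_eqI)
      fix i show "lk a i = lk b i"
      proof (cases "i \<in> {1..n}")
        case True
        then have "i \<in> set [1..<Suc n]" by auto
        moreover have "\<forall>x\<in>set [1..<Suc n]. lk a x = lk b x" using e by (simp only: map_eq_conv)
        ultimately show ?thesis by blast
      next
        case False
        then have "i \<notin> ks a" "i \<notin> ks b" using a b by (auto simp: Mon_def)
        then show ?thesis by (simp add: in_keys_iff)
      qed
    qed
  qed
  have "?g ` Mon n d \<subseteq> {xs. set xs \<subseteq> {0..d} \<and> length xs = n}"
    using lk_le_mdeg by (auto simp: Mon_def)
  then have "finite (?g ` Mon n d)"
    by (rule finite_subset) (rule finite_lists_length_eq, simp)
  then show ?thesis using finite_imageD[OF _ inj] by blast
qed

lemma down_exists: "i \<le> mdeg c \<Longrightarrow> \<exists>b. dvm b c \<and> mdeg b = i"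
proof (induction i)
  case 0 then show ?case by (intro exI[of _ 0]) (auto simp: dvm_def)
next
  case (Suc i)
  then obtain b where b: "dvm b c" "mdeg b = i" by auto
  have "\<exists>k. lk b k < lk c k"
  proof (rule ccontr)
    assume "\<not> ?thesis"
    then have "b = c" using b(1) by (intro poly_mapping_eqI) (metis le_antisym not_less dvm_def)
    then show False using b Suc.prems by simp
  qed
  then obtain k where k: "lk b k < lk c k" by auto
  show ?case
    using b k by (intro exI[of _ "b + sg k 1"]) (auto simp: dvm_def lookup_add lookup_single when_def mdeg_add)
qed

section \<open>Ideals\<close>

lemma keys_monom [simp]: "ks (monom a :: 'k::zero_neq_one mpoly) = {a}"
  by (simp add: monom_def)

lemma monom_mult: "(monom a :: 'k::comm_ring_1 mpoly) * monom b = monom (a + b)"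
  by (simp add: monom_def mult_single)

lemma monom_inj: "(monom a :: 'k::zero_neq_one mpoly) = monom b \<longleftrightarrow> a = b"
  by (metis keys_monom singleton_inject)

lemma polyring_mult: "r \<in> polyring n \<Longrightarrow> f \<in> polyring n \<Longrightarrow> (r * f :: 'k::comm_ring_1 mpoly) \<in> polyring n"
  unfolding polyring_def
proof safe
  fix a i assume r: "\<forall>a\<in>ks r. ks a \<subseteq> {1..n}" and f: "\<forall>a\<in>ks f. ks a \<subseteq> {1..n}"
    and a: "a \<in> ks (r * f)" and i: "i \<in> ks a"
  obtain b c where "a = b + c" "b \<in> ks r" "c \<in> ks f" using keys_mult a by blast
  then show "i \<in> {1..n}" using r f i keys_add[of b c] by blast
qed

lemma polyring_add: "f \<in> polyring n \<Longrightarrow> g \<in> polyring n \<Longrightarrow> f + g \<in> polyring n"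
  using keys_add by (fastforce simp: polyring_def)

lemma polyring_diff: "f \<in> polyring n \<Longrightarrow> g \<in> polyring n \<Longrightarrow> (f - g :: 'k::ab_group_add mpoly) \<in> polyring n"
  using keys_diff by (fastforce simp: polyring_def)

lemma polyring_ideal: "is_ideal n (polyring n :: 'k::comm_ring_1 mpoly set)"
proof -
  have "(0::'k mpoly) \<in> polyring n" by (simp add: polyring_def)
  then show ?thesis unfolding is_ideal_def using polyring_add polyring_mult by blast
qed

lemma ideal_gen_sub: "G \<subseteq> ideal_gen n G"
  unfolding ideal_gen_def by auto

lemma ideal_gen_min: "is_ideal n I \<Longrightarrow> G \<subseteq> I \<Longrightarrow> ideal_gen n G \<subseteq> I"
  unfolding ideal_gen_def by auto

lemma zero_in_gen: "0 \<in> ideal_gen n G"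
  unfolding ideal_gen_def is_ideal_def by blast

lemma ideal_gen_is_ideal:
  assumes "G \<subseteq> polyring n"
  shows "is_ideal n (ideal_gen n G :: 'k::comm_ring_1 mpoly set)"
proof -
  have ne: "polyring n \<in> {I. is_ideal n I \<and> G \<subseteq> I}" using assms polyring_ideal by blast
  have sub: "ideal_gen n G \<subseteq> polyring n" unfolding ideal_gen_def using ne by blast
  have add: "f + g \<in> ideal_gen n G" if f: "f \<in> ideal_gen n G" and g: "g \<in> ideal_gen n G" for f g
    unfolding ideal_gen_def
  proof (rule InterI)
    fix I assume I: "I \<in> {I. is_ideal n I \<and> G \<subseteq> I}"
    then have "is_ideal n I" "f \<in> I" "g \<in> I" using f g unfolding ideal_gen_def by blast+
    then show "f + g \<in> I" unfolding is_ideal_def by blast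
  qed
  have mul: "r * f \<in> ideal_gen n G" if f: "f \<in> ideal_gen n G" and r: "r \<in> polyring n" for f r
    unfolding ideal_gen_def
  proof (rule InterI)
    fix I assume I: "I \<in> {I. is_ideal n I \<and> G \<subseteq> I}"
    then have "is_ideal n I" "f \<in> I" using f unfolding ideal_gen_def by blast+
    then show "r * f \<in> I" using r unfolding is_ideal_def by blast
  qed
  show ?thesis unfolding is_ideal_def using sub add mul zero_in_gen by blast
qed

lemma ideal_gen_mono: "G \<subseteq> polyring n \<Longrightarrow> G' \<subseteq> G \<Longrightarrow> ideal_gen n G' \<subseteq> (ideal_gen n G :: 'k::comm_ring_1 mpoly set)"
  by (rule ideal_gen_min[OF ideal_gen_is_ideal]) (use ideal_gen_sub in blast)+

lemma ideal_sum:
  assumes "is_ideal n K" "finite A" "\<And>x. x \<in> A \<Longrightarrow> f x \<in> K"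
  shows "sum f A \<in> K"
  using assms(2,3)
proof (induction A rule: finite_induct)
  case empty then show ?case using assms(1) by (simp add: is_ideal_def)
next
  case (insert x F) then show ?case using assms(1) by (simp add: is_ideal_def)
qed

lemma poly_decomp: "f = (\<Sum>a\<in>ks f. sg a (lk f a))"
proof (rule poly_mapping_eqI)
  fix k
  have "lk (\<Sum>a\<in>ks f. sg a (lk f a)) k = (\<Sum>a\<in>ks f. if a = k then lk f a else 0)"
    by (simp add: lookup_sum lookup_single when_def)
  also have "\<dots> = lk f k"
    by (simp add: sum.delta in_keys_iff)
  finally show "lk f k = lk (\<Sum>a\<in>ks f. sg a (lk f a)) k" by simp
qed

lemma const_polyring: "sg 0 c \<in> polyring n"
  by (simp add: polyring_def)

lemma sg_as_monom: "sg a c = sg 0 c * (monom a :: 'k::comm_ring_1 mpoly)"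
  by (simp add: monom_def mult_single)

lemma L0:
  assumes K: "is_ideal n (K :: 'k::comm_ring_1 mpoly set)" and m: "\<And>a. a \<in> ks f \<Longrightarrow> monom a \<in> K"
  shows "f \<in> K"
proof -
  have "(\<Sum>a\<in>ks f. sg a (lk f a)) \<in> K"
  proof (rule ideal_sum[OF K finite_keys])
    fix a assume "a \<in> ks f"
    have "sg 0 (lk f a) * monom a \<in> K"
      using K m[OF \<open>a \<in> ks f\<close>] const_polyring unfolding is_ideal_def by blast
    then show "sg a (lk f a) \<in> K" by (simp only: sg_as_monom[symmetric])
  qed
  then show ?thesis using poly_decomp[of f] by simp
qed

lemma dvm_add_mono: "dvm s a \<Longrightarrow> dvm s (a + c)"
  unfolding dvm_def by (metis lookup_add trans_le_add1)

lemma upc_up: "upc n (up n S)"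
  unfolding upc_def
proof (intro conjI ballI)
  show "up n S \<subseteq> Mons n" by (auto simp: up_def)
next
  fix a c assume a: "a \<in> up n S" and c: "c \<in> Mons n"
  then obtain s where "s \<in> S" "dvm s a" "a \<in> Mons n" by (auto simp: up_def)
  then show "a + c \<in> up n S" using Mons_add[OF _ c] dvm_add_mono unfolding up_def by blast
qed

lemma Mons_minus: "a \<in> Mons n \<Longrightarrow> a - s \<in> Mons n"
  using keys_minus_nat[of a s] by (auto simp: Mons_def)

lemma up_upc: assumes "upc n U" shows "up n U = U"
proof
  show "up n U \<subseteq> U"
  proof
    fix a assume "a \<in> up n U"
    then obtain s where s: "s \<in> U" "dvm s a" "a \<in> Mons n" by (auto simp: up_def)
    have "s + (a - s) \<in> U" using assms s Mons_minus[OF s(3)] by (auto simp: upc_def)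
    then show "a \<in> U" using dvm_decomp[OF s(2)] by simp
  qed
  show "U \<subseteq> up n U" unfolding up_def using assms dvm_refl unfolding upc_def by blast
qed

lemma sub_up: "S \<subseteq> Mons n \<Longrightarrow> S \<subseteq> up n S"
  unfolding up_def using dvm_refl by blast

lemma IU_polyring: "U \<subseteq> Mons n \<Longrightarrow> IU U \<subseteq> polyring n"
  by (auto simp: IU_def polyring_def Mons_def)

lemma IU_ideal:
  assumes "upc n U" shows "is_ideal n (IU U :: 'k::comm_ring_1 mpoly set)"
  unfolding is_ideal_def
proof (intro conjI ballI)
  show "IU U \<subseteq> polyring n" using assms IU_polyring upc_def by blast
  show "0 \<in> IU U" by (simp add: IU_def)
next
  fix f g :: "'k mpoly" assume "f \<in> IU U" "g \<in> IU U"
  then show "f + g \<in> IU U" using keys_add[of f g] by (auto simp: IU_def)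
next
  fix r f :: "'k mpoly" assume r: "r \<in> polyring n" and f: "f \<in> IU U"
  have "ks (r * f) \<subseteq> U"
  proof
    fix a assume "a \<in> ks (r * f)"
    then obtain b c where "a = b + c" "b \<in> ks r" "c \<in> ks f" using keys_mult by blast
    moreover have "b \<in> Mons n" using r \<open>b \<in> ks r\<close> by (auto simp: polyring_def Mons_def)
    moreover have "c + b \<in> U" using assms f \<open>c \<in> ks f\<close> \<open>b \<in> Mons n\<close> by (auto simp: upc_def IU_def)
    ultimately show "a \<in> U" by (simp add: add.commute)
  qed
  then show "r * f \<in> IU U" by (simp add: IU_def)
qed

lemma monom_IU: "(monom a :: 'k::zero_neq_one mpoly) \<in> IU U \<longleftrightarrow> a \<in> U"
  by (simp add: IU_def)

lemma G1:
  assumes S: "S \<subseteq> Mons n" and A1: "monom ` S \<subseteq> A" and A2: "A \<subseteq> IU (up n S)"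
  shows "ideal_gen n A = (IU (up n S) :: 'k::comm_ring_1 mpoly set)"
proof
  show "ideal_gen n A \<subseteq> IU (up n S)"
    using ideal_gen_min[OF IU_ideal[OF upc_up] A2] .
  show "IU (up n S) \<subseteq> ideal_gen n A"
  proof
    fix f :: "'k mpoly" assume f: "f \<in> IU (up n S)"
    show "f \<in> ideal_gen n A" unfolding ideal_gen_def
    proof
      fix K assume "K \<in> {I. is_ideal n I \<and> A \<subseteq> I}"
      then have K: "is_ideal n K" "A \<subseteq> K" by auto
      show "f \<in> K"
      proof (rule L0[OF K(1)])
        fix a assume "a \<in> ks f"
        then have a: "a \<in> up n S" using f by (auto simp: IU_def)
        then obtain s where s: "s \<in> S" "dvm s a" "a \<in> Mons n" by (auto simp: up_def)
        have "monom a = monom (a - s) * (monom s :: 'k mpoly)"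
          using dvm_decomp[OF s(2)] by (simp add: monom_mult add.commute)
        moreover have "monom (a - s) \<in> (polyring n :: 'k mpoly set)"
          using s(3) keys_minus_nat[of a s] by (auto simp: polyring_def Mons_def)
        moreover have "monom s \<in> K" using s(1) A1 K(2) by auto
        ultimately show "monom a \<in> K" using K(1) by (simp add: is_ideal_def)
      qed
    qed
  qed
qed

lemma gen_IU: assumes "upc n U" shows "ideal_gen n (IU U) = (IU U :: 'k::comm_ring_1 mpoly set)"
proof -
  have "monom ` U \<subseteq> (IU U :: 'k mpoly set)" by (auto simp: IU_def)
  then show ?thesis using G1[of U n "IU U"] up_upc[OF assms] assms by (simp add: upc_def)
qed

section \<open>Dimensions\<close>

lemma kscale_eq: "kscale c f = sg 0 c * f"
  by (simp add: kscale_def mult_map_scale_conv_mult)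

lemma vs_kscale: "vector_space (kscale :: 'k::field \<Rightarrow> 'k mpoly \<Rightarrow> 'k mpoly)"
  by unfold_locales (simp_all add: kscale_eq distrib_left single_add distrib_right mult.assoc[symmetric] mult_single)

lemma lookup_kscale: "lk (kscale c f) a = c * lk f a"
  by (simp add: kscale_eq mult_map_scale_conv_mult[symmetric] map.rep_eq when_def)

lemma dimK_keys:
  assumes T: "finite T"
  shows "dimK {f :: 'k::field mpoly. ks f \<subseteq> T} = card T"
proof -
  interpret v: vector_space "kscale :: 'k \<Rightarrow> 'k mpoly \<Rightarrow> 'k mpoly" by (rule vs_kscale)
  let ?V = "{f :: 'k mpoly. ks f \<subseteq> T}"
  let ?B = "monom ` T :: 'k mpoly set"
  have sub: "?B \<subseteq> ?V" by auto
  have span: "?V \<subseteq> v.span ?B"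
  proof
    fix f assume f: "f \<in> ?V"
    have "(\<Sum>a\<in>ks f. kscale (lk f a) (monom a)) \<in> v.span ?B"
      using f by (intro v.span_sum v.span_scale v.span_base) auto
    moreover have "(\<Sum>a\<in>ks f. kscale (lk f a) (monom a)) = (\<Sum>a\<in>ks f. sg a (lk f a))"
      by (simp add: kscale_eq sg_as_monom[symmetric])
    moreover have "(\<Sum>a\<in>ks f. sg a (lk f a)) = f" by (rule poly_decomp[symmetric])
    ultimately show "f \<in> v.span ?B" by simp
  qed
  have inj: "inj_on (monom :: _ \<Rightarrow> 'k mpoly) T" by (auto simp: inj_on_def monom_inj)
  have indep: "v.independent ?B"
  proof (rule v.independent_if_scalars_zero)
    show "finite ?B" using T by simp
  next
    fix g x assume s: "(\<Sum>x\<in>?B. kscale (g x) x) = 0" and x: "x \<in> ?B"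
    then obtain a0 where a0: "a0 \<in> T" "x = monom a0" by auto
    have "0 = lk (\<Sum>x\<in>?B. kscale (g x) x) a0" using s by simp
    also have "\<dots> = (\<Sum>x\<in>?B. g x * lk x a0)" by (simp add: lookup_sum lookup_kscale)
    also have "\<dots> = (\<Sum>a\<in>T. g (monom a) * lk (monom a :: 'k mpoly) a0)"
      by (simp add: sum.reindex[OF inj])
    also have "\<dots> = (\<Sum>a\<in>T. if a = a0 then g (monom a) else 0)"
      by (intro sum.cong) (auto simp: monom_def lookup_single when_def)
    also have "\<dots> = g x" using a0 T by simp
    finally show "g x = 0" by simp
  qed
  have "card ?B = v.dim ?V" by (rule v.basis_card_eq_dim[OF sub span indep])
  moreover have "card ?B = card T" using card_image[OF inj] .
  ultimately show ?thesis by (simp add: dimK_def)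
qed

lemma hilb_IU: "hilb n (IU U :: 'k::field mpoly set) d = card (Mon n d - U)"
proof -
  have h: "(hom n d :: 'k mpoly set) = {f. ks f \<subseteq> Mon n d}" by (simp add: hom_def)
  have i: "IU U \<inter> {f :: 'k mpoly. ks f \<subseteq> Mon n d} = {f. ks f \<subseteq> Mon n d \<inter> U}" by (auto simp: IU_def)
  have "hilb n (IU U :: 'k::field mpoly set) d = dimK {f :: 'k mpoly. ks f \<subseteq> Mon n d} - dimK {f :: 'k mpoly. ks f \<subseteq> Mon n d \<inter> U}"
    by (simp only: hilb_def h i)
  also have "\<dots> = card (Mon n d) - card (Mon n d \<inter> U)"
    using dimK_keys[of "Mon n d", where 'k='k] dimK_keys[of "Mon n d \<inter> U", where 'k='k] finite_Mon by simp
  finally show ?thesis by (simp add: finite_Mon card_Diff_subset_Int)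
qed

section \<open>Orders and top segments\<close>

definition sto :: "('a \<Rightarrow> 'a \<Rightarrow> bool) \<Rightarrow> 'a set \<Rightarrow> bool" where
  "sto gt S \<longleftrightarrow> (\<forall>a\<in>S. \<not> gt a a) \<and> (\<forall>a\<in>S. \<forall>b\<in>S. \<forall>c\<in>S. gt a b \<longrightarrow> gt b c \<longrightarrow> gt a c)
     \<and> (\<forall>a\<in>S. \<forall>b\<in>S. a \<noteq> b \<longrightarrow> gt a b \<or> gt b a)"

lemma sto_irr: "sto gt S \<Longrightarrow> a \<in> S \<Longrightarrow> \<not> gt a a"
  unfolding sto_def by blast
lemma sto_trans: "sto gt S \<Longrightarrow> a \<in> S \<Longrightarrow> b \<in> S \<Longrightarrow> c \<in> S \<Longrightarrow> gt a b \<Longrightarrow> gt b c \<Longrightarrow> gt a c"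
  unfolding sto_def by blast
lemma sto_tot: "sto gt S \<Longrightarrow> a \<in> S \<Longrightarrow> b \<in> S \<Longrightarrow> a \<noteq> b \<Longrightarrow> gt a b \<or> gt b a"
  unfolding sto_def by blast

lemma sto_subset: assumes "sto gt S" "T \<subseteq> S" shows "sto gt T"
  unfolding sto_def
proof (intro conjI ballI impI)
  fix a assume "a \<in> T" then show "\<not> gt a a" using sto_irr[OF assms(1)] assms(2) by blast
next
  fix a b c assume "a \<in> T" "b \<in> T" "c \<in> T" "gt a b" "gt b c"
  then show "gt a c" using sto_trans[OF assms(1)] assms(2) by blast
next
  fix a b assume "a \<in> T" "b \<in> T" "a \<noteq> b"
  then show "gt a b \<or> gt b a" using sto_tot[OF assms(1)] assms(2) by blast
qed

lemma top_sub: "top gt r S \<subseteq> S"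
  by (auto simp: top_def)

lemma top_zero: "top gt 0 S = {}"
  by (auto simp: top_def)

lemma top_up:
  assumes "finite S" "sto gt S" "a \<in> top gt r S" "b \<in> S" "gt b a"
  shows "b \<in> top gt r S"
proof -
  have a: "a \<in> S" "card {c\<in>S. gt c a} < r" using assms(3) by (auto simp: top_def)
  have "{c\<in>S. gt c b} \<subseteq> {c\<in>S. gt c a}" using sto_trans[OF assms(2) _ assms(4) a(1) _ assms(5)] by blast
  then have "card {c\<in>S. gt c b} \<le> card {c\<in>S. gt c a}" using assms(1) by (intro card_mono) auto
  then show ?thesis using a assms(4) by (auto simp: top_def)
qed

lemma top_card:
  assumes S: "finite S" and o: "sto gt S" and r: "r \<le> card S"
  shows "card (top gt r S) = r"
proof -
  define rk where "rk a = card {b\<in>S. gt b a}" for a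
  have inj: "inj_on rk S"
  proof (rule inj_onI, rule ccontr)
    fix a b assume ab: "a \<in> S" "b \<in> S" "rk a = rk b" "a \<noteq> b"
    have lt: "rk x < rk y" if xy: "x \<in> S" "y \<in> S" "gt x y" for x y
    proof -
      have sub: "{c\<in>S. gt c x} \<subseteq> {c\<in>S. gt c y}"
      proof
        fix c assume "c \<in> {c\<in>S. gt c x}"
        then have c: "c \<in> S" "gt c x" by auto
        have "gt c y" by (rule sto_trans[OF o c(1) xy(1) xy(2) c(2) xy(3)])
        then show "c \<in> {c\<in>S. gt c y}" using c(1) by simp
      qed
      have "x \<in> {c\<in>S. gt c y}" using xy by simp
      moreover have "x \<notin> {c\<in>S. gt c x}" using sto_irr[OF o xy(1)] by simp
      ultimately have ps: "{c\<in>S. gt c x} \<subset> {c\<in>S. gt c y}" using sub by blast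
      have "card {c\<in>S. gt c x} < card {c\<in>S. gt c y}"
        by (rule psubset_card_mono[OF _ ps]) (simp add: S)
      then show ?thesis by (simp add: rk_def)
    qed
    from sto_tot[OF o ab(1,2,4)] show False
    proof
      assume "gt a b" then show False using lt[OF ab(1,2)] ab(3) by simp
    next
      assume "gt b a" then show False using lt[OF ab(2,1)] ab(3) by simp
    qed
  qed
  have img: "rk ` S \<subseteq> {..<card S}"
  proof
    fix x assume "x \<in> rk ` S"
    then obtain a where a: "a \<in> S" "x = rk a" by auto
    have sub: "{c\<in>S. gt c a} \<subseteq> S - {a}" using sto_irr[OF o a(1)] by blast
    have "card {c\<in>S. gt c a} \<le> card (S - {a})" using S sub by (simp add: card_mono)
    then have "rk a \<le> card (S - {a})" by (simp add: rk_def)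
    also have "card (S - {a}) < card S" by (rule card_Diff1_less[OF S a(1)])
    finally show "x \<in> {..<card S}" using a by simp
  qed
  have ci: "card (rk ` S) = card S" using card_image[OF inj] .
  have eq: "rk ` S = {..<card S}" by (rule card_subset_eq[OF finite_lessThan img]) (simp add: ci)
  have t: "top gt r S = {a\<in>S. rk a < r}" by (simp add: top_def rk_def)
  have "bij_betw rk {a\<in>S. rk a < r} {..<r}"
  proof (rule bij_betw_imageI)
    show "inj_on rk {a\<in>S. rk a < r}" using inj by (rule inj_on_subset) auto
    show "rk ` {a\<in>S. rk a < r} = {..<r}"
    proof
      show "rk ` {a\<in>S. rk a < r} \<subseteq> {..<r}" by auto
      show "{..<r} \<subseteq> rk ` {a\<in>S. rk a < r}"
      proof
        fix x assume x: "x \<in> {..<r}"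
        then have "x \<in> rk ` S" using eq r by auto
        then obtain a where "a \<in> S" "x = rk a" by auto
        then show "x \<in> rk ` {a\<in>S. rk a < r}" using x by auto
      qed
    qed
  qed
  then have "card {a\<in>S. rk a < r} = card {..<r}" by (rule bij_betw_same_card)
  then show ?thesis using t by simp
qed

lemma sto_lex: "sto lex_gt S"
  unfolding sto_def
proof (intro conjI ballI impI)
  fix a assume "a \<in> S" show "\<not> lex_gt a a" by (simp add: lex_gt_def)
next
  fix a b c assume "lex_gt a b" "lex_gt b c"
  then obtain i j where i: "lk b i < lk a i" "\<forall>k<i. lk a k = lk b k"
    and j: "lk c j < lk b j" "\<forall>k<j. lk b k = lk c k" by (auto simp: lex_gt_def)
  show "lex_gt a c" unfolding lex_gt_def
  proof (cases i j rule: linorder_cases)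
    case less then show "\<exists>i. lk c i < lk a i \<and> (\<forall>j<i. lk a j = lk c j)"
      using i j by (intro exI[of _ i]) auto
  next
    case equal then show "\<exists>i. lk c i < lk a i \<and> (\<forall>j<i. lk a j = lk c j)"
      using i j by (intro exI[of _ i]) auto
  next
    case greater then show "\<exists>i. lk c i < lk a i \<and> (\<forall>j<i. lk a j = lk c j)"
      using i j by (intro exI[of _ j]) auto
  qed
next
  fix a b :: "nat \<Rightarrow>\<^sub>0 nat" assume "a \<noteq> b"
  then have ne: "{i. lk a i \<noteq> lk b i} \<noteq> {}" by (metis (mono_tags) empty_Collect_eq poly_mapping_eqI)
  define i where "i = (LEAST i. lk a i \<noteq> lk b i)"
  have i: "lk a i \<noteq> lk b i" using ne unfolding i_def by (metis (mono_tags) LeastI empty_Collect_eq)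
  have lt: "\<forall>k<i. lk a k = lk b k" unfolding i_def using not_less_Least by blast
  show "lex_gt a b \<or> lex_gt b a"
  proof (cases "lk a i < lk b i")
    case True then have "lex_gt b a" using lt unfolding lex_gt_def by (metis)
    then show ?thesis ..
  next
    case False then have "lex_gt a b" using lt i unfolding lex_gt_def by (metis linorder_neqE_nat)
    then show ?thesis ..
  qed
qed

lemma sto_revlex: "sto revlex_gt (Mon n d)"
  unfolding sto_def
proof (intro conjI ballI impI)
  fix a assume "a \<in> Mon n d" show "\<not> revlex_gt a a" by (simp add: revlex_gt_def)
next
  fix a b c assume abc: "a \<in> Mon n d" "b \<in> Mon n d" "c \<in> Mon n d" and "revlex_gt a b" "revlex_gt b c"
  then obtain i j where i: "lk a i < lk b i" "\<forall>k>i. lk a k = lk b k"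
    and j: "lk b j < lk c j" "\<forall>k>j. lk b k = lk c k" by (auto simp: revlex_gt_def Mon_def)
  have ex: "\<exists>i. lk a i < lk c i \<and> (\<forall>j>i. lk a j = lk c j)"
  proof (cases i j rule: linorder_cases)
    case less then show ?thesis using i j by (intro exI[of _ j]) auto
  next
    case equal then show ?thesis using i j by (intro exI[of _ i]) auto
  next
    case greater then show ?thesis using i j by (intro exI[of _ i]) auto
  qed
  then show "revlex_gt a c" using abc by (auto simp: revlex_gt_def Mon_def)
next
  fix a b assume ab: "a \<in> Mon n d" "b \<in> Mon n d" "a \<noteq> b"
  then have ne: "{i. lk a i \<noteq> lk b i} \<noteq> {}" by (metis (mono_tags) empty_Collect_eq poly_mapping_eqI)
  have fin: "finite {i. lk a i \<noteq> lk b i}"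
    by (rule finite_subset[of _ "ks a \<union> ks b"]) (auto simp: in_keys_iff)
  define i where "i = Max {i. lk a i \<noteq> lk b i}"
  have i: "lk a i \<noteq> lk b i" using Max_in[OF fin ne] unfolding i_def by simp
  have gt: "\<forall>k>i. lk a k = lk b k" unfolding i_def using Max_ge[OF fin] by (metis (mono_tags) mem_Collect_eq not_le)
  have deq: "mdeg a = mdeg b" using ab by (simp add: Mon_def)
  show "revlex_gt a b \<or> revlex_gt b a"
  proof (cases "lk a i < lk b i")
    case True then have "revlex_gt a b" using gt deq unfolding revlex_gt_def by metis
    then show ?thesis ..
  next
    case False then have "revlex_gt b a" using gt i deq unfolding revlex_gt_def by (metis linorder_neqE_nat)
    then show ?thesis ..
  qed
qed

lemma revlex_xn:
  assumes "a \<in> Mon n d" "b \<in> Mon n d" "lk a n = 0" "0 < lk b n"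
  shows "revlex_gt a b"
proof -
  have "\<forall>j>n. lk a j = lk b j"
  proof (intro allI impI)
    fix j assume "n < j"
    then have "j \<notin> ks a" "j \<notin> ks b" using assms(1,2) by (auto simp: Mon_def)
    then show "lk a j = lk b j" by (simp add: in_keys_iff)
  qed
  then have "\<exists>i. lk a i < lk b i \<and> (\<forall>j>i. lk a j = lk b j)" using assms(3,4) by (intro exI[of _ n]) simp
  then show ?thesis using assms(1,2) unfolding revlex_gt_def Mon_def by auto
qed

section \<open>The staged monomial sets\<close>

fun Uw :: "nat \<Rightarrow> nat list \<Rightarrow> (nat \<Rightarrow>\<^sub>0 nat) set \<Rightarrow> nat \<Rightarrow> (nat \<Rightarrow>\<^sub>0 nat) set" where
  "Uw n h U0 0 = U0"
| "Uw n h U0 (Suc d) = Uw n h U0 d \<union>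
     up n (top revlex_gt (card (Mon n d - Uw n h U0 d) - hv h d) (Mon n d - Uw n h U0 d))"

definition Tw :: "nat \<Rightarrow> nat list \<Rightarrow> (nat \<Rightarrow>\<^sub>0 nat) set \<Rightarrow> nat \<Rightarrow> (nat \<Rightarrow>\<^sub>0 nat) set" where
  "Tw n h U0 d = top revlex_gt (card (Mon n d - Uw n h U0 d) - hv h d) (Mon n d - Uw n h U0 d)"

lemma Uw_Suc: "Uw n h U0 (Suc d) = Uw n h U0 d \<union> up n (Tw n h U0 d)"
  by (simp add: Tw_def)

declare Uw.simps(2) [simp del]

lemma Tw_sub: "Tw n h U0 d \<subseteq> Mon n d - Uw n h U0 d"
  unfolding Tw_def by (rule top_sub)

lemma Tw_card: "card (Tw n h U0 d) = card (Mon n d - Uw n h U0 d) - hv h d"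
  unfolding Tw_def
  by (rule top_card) (auto intro: sto_subset[OF sto_revlex] simp: finite_Mon)

lemma Tw_Mons: "Tw n h U0 d \<subseteq> Mons n"
  using Tw_sub Mon_Mons by blast

lemma Tw_up: "Tw n h U0 d \<subseteq> up n (Tw n h U0 d)"
  by (rule sub_up[OF Tw_Mons])

lemma Tw_Uw: "Tw n h U0 d \<subseteq> Uw n h U0 (Suc d)"
  using Tw_up[of n h U0 d] unfolding Uw_Suc by blast

lemma upcI: "U \<subseteq> Mons n \<Longrightarrow> (\<And>a c. a \<in> U \<Longrightarrow> c \<in> Mons n \<Longrightarrow> a + c \<in> U) \<Longrightarrow> upc n U"
  unfolding upc_def by blast
lemma upcD1: "upc n U \<Longrightarrow> U \<subseteq> Mons n"
  unfolding upc_def by blast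
lemma upcD2: "upc n U \<Longrightarrow> a \<in> U \<Longrightarrow> c \<in> Mons n \<Longrightarrow> a + c \<in> U"
  unfolding upc_def by blast

lemma upc_Un: assumes "upc n A" "upc n B" shows "upc n (A \<union> B)"
proof (rule upcI)
  show "A \<union> B \<subseteq> Mons n" using upcD1[OF assms(1)] upcD1[OF assms(2)] by blast
  fix a c assume "a \<in> A \<union> B" "c \<in> Mons n"
  then show "a + c \<in> A \<union> B" using upcD2[OF assms(1)] upcD2[OF assms(2)] by blast
qed

lemma upc_UN: assumes "\<And>d. upc n (A d)" shows "upc n (\<Union>d. A d)"
proof (rule upcI)
  show "(\<Union>d. A d) \<subseteq> Mons n" using upcD1[OF assms] by blast
  fix a c assume "a \<in> (\<Union>d. A d)" "c \<in> Mons n"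
  then obtain d where "a \<in> A d" by blast
  then have "a + c \<in> A d" using upcD2[OF assms] \<open>c \<in> Mons n\<close> by blast
  then show "a + c \<in> (\<Union>d. A d)" by blast
qed

lemma Uw_upc: assumes "upc n U0" shows "upc n (Uw n h U0 d)"
proof (induction d)
  case 0 then show ?case using assms by simp
next
  case (Suc d) then show ?case unfolding Uw_Suc by (rule upc_Un[OF _ upc_up])
qed

lemma Uw_mono: "d \<le> d' \<Longrightarrow> Uw n h U0 d \<subseteq> Uw n h U0 d'"
proof (induction d' rule: dec_induct)
  case base then show ?case by simp
next
  case (step k) then show ?case by (auto simp: Uw_Suc)
qed

lemma up_Un: "up n (A \<union> B) = up n A \<union> up n B"
  unfolding up_def by blast

lemma wstage_eq:
  assumes U0: "upc n U0"
  shows "wstage n h (IU U0 :: 'k::field mpoly set) d = IU (Uw n h U0 d)"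
proof (induction d)
  case 0 then show ?case by simp
next
  case (Suc d)
  let ?U = "Uw n h U0 d"
  let ?T = "Tw n h U0 d"
  have upcU: "upc n ?U" by (rule Uw_upc[OF U0])
  have set_eq: "{a \<in> Mon n d. (monom a :: 'k mpoly) \<notin> IU ?U} = Mon n d - ?U"
    by (auto simp: monom_IU)
  have hl: "hilb n (IU ?U :: 'k mpoly set) d = card (Mon n d - ?U)" by (rule hilb_IU)
  have "wstage n h (IU U0 :: 'k mpoly set) (Suc d) = ideal_gen n (IU ?U \<union> monom ` ?T)"
    using Suc.IH by (simp add: Let_def set_eq hl Tw_def)
  also have "\<dots> = IU (up n (?U \<union> ?T))"
  proof (rule G1)
    show "?U \<union> ?T \<subseteq> Mons n" using upcU Tw_sub[of n h U0 d] Mon_Mons by (auto simp: upc_def)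
    show "monom ` (?U \<union> ?T) \<subseteq> (IU ?U \<union> monom ` ?T :: 'k mpoly set)" by (auto simp: monom_IU)
    have "?U \<subseteq> up n (?U \<union> ?T)" using up_upc[OF upcU] up_Un by blast
    moreover have "?T \<subseteq> up n (?U \<union> ?T)" using Tw_up[of n h U0 d] up_Un by blast
    ultimately show "(IU ?U \<union> monom ` ?T :: 'k mpoly set) \<subseteq> IU (up n (?U \<union> ?T))"
      by (auto simp: IU_def monom_def)
  qed
  also have "up n (?U \<union> ?T) = Uw n h U0 (Suc d)"
    by (simp add: Uw_Suc up_Un up_upc[OF upcU])
  finally show ?case .
qed

lemma finite_in_chain:
  fixes A :: "nat \<Rightarrow> 'a set"
  assumes "finite F" "F \<subseteq> (\<Union>d. A d)" "\<And>d d'. d \<le> d' \<Longrightarrow> A d \<subseteq> A d'"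
  shows "\<exists>d. F \<subseteq> A d"
  using assms(1,2)
proof (induction F rule: finite_induct)
  case empty then show ?case by simp
next
  case (insert x F)
  then obtain d where d: "F \<subseteq> A d" by auto
  obtain d' where d': "x \<in> A d'" using insert.prems by auto
  have "A d \<subseteq> A (max d d')" by (rule assms(3)) simp
  moreover have "A d' \<subseteq> A (max d d')" by (rule assms(3)) simp
  ultimately have "F \<subseteq> A (max d d')" "x \<in> A (max d d')" using d d' by blast+
  then show ?case by blast
qed

definition Uinf :: "nat \<Rightarrow> nat list \<Rightarrow> (nat \<Rightarrow>\<^sub>0 nat) set \<Rightarrow> (nat \<Rightarrow>\<^sub>0 nat) set" where
  "Uinf n h U0 = (\<Union>d. Uw n h U0 d)"

lemma Uinf_upc: "upc n U0 \<Longrightarrow> upc n (Uinf n h U0)"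
  unfolding Uinf_def by (intro upc_UN Uw_upc)

lemma Uw_Uinf: "Uw n h U0 d \<subseteq> Uinf n h U0"
  unfolding Uinf_def by blast

lemma stages_Uinf:
  assumes U0: "upc n U0"
  shows "(\<Union>d. wstage n h (IU U0 :: 'k::field mpoly set) d) = IU (Uinf n h U0)"
proof
  show "(\<Union>d. wstage n h (IU U0 :: 'k mpoly set) d) \<subseteq> IU (Uinf n h U0)"
  proof
    fix f assume "f \<in> (\<Union>d. wstage n h (IU U0 :: 'k mpoly set) d)"
    then obtain d where "f \<in> wstage n h (IU U0 :: 'k mpoly set) d" by blast
    then have "f \<in> IU (Uw n h U0 d)" by (simp only: wstage_eq[OF U0])
    then show "f \<in> IU (Uinf n h U0)" using Uw_Uinf[of n h U0 d] unfolding IU_def by blast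
  qed
  show "IU (Uinf n h U0) \<subseteq> (\<Union>d. wstage n h (IU U0 :: 'k mpoly set) d)"
  proof
    fix f :: "'k mpoly" assume "f \<in> IU (Uinf n h U0)"
    then have "ks f \<subseteq> (\<Union>d. Uw n h U0 d)" by (simp add: IU_def Uinf_def)
    from finite_in_chain[OF finite_keys this Uw_mono]
    obtain d where "ks f \<subseteq> Uw n h U0 d" by blast
    then have "f \<in> IU (Uw n h U0 d)" by (simp add: IU_def)
    then have "f \<in> wstage n h (IU U0 :: 'k mpoly set) d" by (simp only: wstage_eq[OF U0])
    then show "f \<in> (\<Union>d. wstage n h (IU U0 :: 'k mpoly set) d)" by blast
  qed
qed

lemma Uinf_count: "card (Mon n j - Uinf n h U0) \<le> hv h j"
proof -
  let ?U = "Uw n h U0 j" and ?T = "Tw n h U0 j" and ?M = "Mon n j"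
  have "?M - Uinf n h U0 \<subseteq> (?M - ?U) - ?T"
  proof -
    have "?T \<subseteq> Uw n h U0 (Suc j)" by (rule Tw_Uw)
    then show ?thesis using Uw_Uinf[of n h U0 "Suc j"] Uw_Uinf[of n h U0 j] by blast
  qed
  then have "card (?M - Uinf n h U0) \<le> card ((?M - ?U) - ?T)"
    by (intro card_mono) (auto simp: finite_Mon)
  also have "\<dots> = card (?M - ?U) - card ?T"
    using Tw_sub[of n h U0 j] by (intro card_Diff_subset) (auto intro: finite_subset[OF _ finite_Mon])
  also have "\<dots> \<le> hv h j" by (simp add: Tw_card)
  finally show ?thesis .
qed

lemma Lex_eq:
  fixes g :: "nat list"
  defines "N \<equiv> hv g 1"
  defines "S \<equiv> (\<Union>d. top lex_gt (card (Mon N d) - hv g d) (Mon N d))"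
  shows "(Lex g :: 'k::field mpoly set) = IU (up N S)"
proof -
  have SM: "S \<subseteq> Mons N" unfolding S_def using top_sub Mon_Mons by fastforce
  have "(Lex g :: 'k mpoly set) = ideal_gen N (monom ` S)"
    unfolding Lex_def Let_def N_def[symmetric] S_def by (simp add: image_UN)
  also have "\<dots> = IU (up N S)"
  proof (rule G1[OF SM])
    show "(monom ` S :: 'k mpoly set) \<subseteq> IU (up N S)" using sub_up[OF SM] by (auto simp: IU_def)
  qed simp
  finally show ?thesis .
qed

lemma Lex_count:
  fixes g :: "nat list"
  defines "N \<equiv> hv g 1"
  defines "S \<equiv> (\<Union>d. top lex_gt (card (Mon N d) - hv g d) (Mon N d))"
  shows "card (Mon N j - up N S) \<le> hv g j"
proof -
  let ?T = "top lex_gt (card (Mon N j) - hv g j) (Mon N j)"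
  have "?T \<subseteq> up N S" using sub_up[of S N] top_sub Mon_Mons unfolding S_def by fastforce
  then have "card (Mon N j - up N S) \<le> card (Mon N j - ?T)"
    by (intro card_mono) (auto simp: finite_Mon)
  also have "\<dots> = card (Mon N j) - card ?T"
    by (intro card_Diff_subset top_sub) (auto intro: finite_subset[OF top_sub finite_Mon])
  also have "card ?T = card (Mon N j) - hv g j"
    by (rule top_card) (auto simp: finite_Mon sto_lex)
  finally show ?thesis by simp
qed

lemma unimodal_unique:
  assumes "unimodal_at h k" "unimodal_at h k'" shows "k = k'"
proof (rule ccontr)
  assume ne: "k \<noteq> k'"
  have *: False if "unimodal_at h a" "unimodal_at h b" "a < b" for a b
  proof -
    have "h ! a < h ! Suc a" using that unfolding unimodal_at_def by blast
    moreover have "Suc a < length h" using that unfolding unimodal_at_def by auto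
    then have "h ! Suc a \<le> h ! a" using that(1) unfolding unimodal_at_def by blast
    ultimately show False by simp
  qed
  show False using ne * assms by (metis linorder_neqE_nat)
qed

lemma Delta_eq: "unimodal_at h k \<Longrightarrow> Delta h = 1 # map (\<lambda>i. h ! i - h ! (i - 1)) [1..<Suc k]"
  unfolding Delta_def Let_def using unimodal_unique by (metis (mono_tags) the_equality)

lemma hv_Delta:
  assumes "unimodal_at h k"
  shows "hv (Delta h) j = (if j = 0 then 1 else if j \<le> k then h ! j - h ! (j - 1) else 0)"
proof -
  have len: "length (Delta h) = Suc k" using Delta_eq[OF assms] by simp
  show ?thesis
  proof (cases j)
    case 0 then show ?thesis using Delta_eq[OF assms] by (simp add: hv_def)
  next
    case (Suc j')
    show ?thesis
    proof (cases "j \<le> k")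
      case True
      then have "Delta h ! j = h ! j - h ! (j - 1)" using Delta_eq[OF assms] Suc by (simp add: nth_Cons del: upt_Suc)
      then show ?thesis using True len Suc by (simp add: hv_def)
    next
      case False then show ?thesis using len Suc by (simp add: hv_def)
    qed
  qed
qed

lemma hv_Delta1:
  assumes "unimodal_at h k" "h ! 0 = 1"
  shows "hv (Delta h) 1 = hv h 1 - 1"
proof (cases "k \<ge> 1")
  case True
  then have "1 < length h" using assms(1) unfolding unimodal_at_def by auto
  then show ?thesis using hv_Delta[OF assms(1), of 1] True assms(2) by (simp add: hv_def)
next
  case False
  then have k0: "k = 0" by simp
  show ?thesis
  proof (cases "1 < length h")
    case True
    then have "h ! 1 \<le> h ! 0" using assms(1) k0 unfolding unimodal_at_def by auto
    then show ?thesis using hv_Delta[OF assms(1), of 1] k0 True assms(2) by (simp add: hv_def)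
  next
    case False then show ?thesis using hv_Delta[OF assms(1), of 1] k0 by (simp add: hv_def)
  qed
qed

lemma sum_Delta:
  assumes "unimodal_at h k" "h ! 0 = 1" "j \<le> k"
  shows "(\<Sum>i\<le>j. hv (Delta h) i) = hv h j"
  using assms(3)
proof (induction j)
  case 0
  have "0 < length h" using assms(1) unfolding unimodal_at_def by auto
  then show ?case using hv_Delta[OF assms(1), of 0] assms(2) by (simp add: hv_def)
next
  case (Suc j)
  have lt: "Suc j < length h" using Suc.prems assms(1) unfolding unimodal_at_def by auto
  have inc: "h ! j < h ! Suc j" using Suc.prems assms(1) unfolding unimodal_at_def by auto
  have "(\<Sum>i\<le>Suc j. hv (Delta h) i) = hv h j + (h ! Suc j - h ! j)"
    using Suc hv_Delta[OF assms(1), of "Suc j"] by simp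
  also have "\<dots> = h ! Suc j" using inc lt by (simp add: hv_def)
  finally show ?case using lt by (simp add: hv_def)
qed

lemma HG_Delta:
  assumes "unimodal_at h k" "h ! 0 = 1"
  shows "(\<Sum>i\<le>d. hv (Delta h) i) \<le> hv h d \<or> hv (Delta h) d = 0"
proof (cases "d \<le> k")
  case True then show ?thesis using sum_Delta[OF assms True] by simp
next
  case False then show ?thesis using hv_Delta[OF assms(1), of d] by simp
qed

lemma Mons_Suc_free: assumes "a \<in> Mons (Suc n')" "lk a (Suc n') = 0" shows "a \<in> Mons n'"
proof -
  have "ks a \<subseteq> {1..n'}"
  proof
    fix i assume i: "i \<in> ks a"
    then have "i \<in> {1..Suc n'}" using assms(1) by (auto simp: Mons_def)
    moreover have "i \<noteq> Suc n'" using i assms(2) by (auto simp: in_keys_iff)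
    ultimately show "i \<in> {1..n'}" by auto
  qed
  then show ?thesis by (simp add: Mons_def)
qed

lemma Mons_mono: "n' \<le> n \<Longrightarrow> Mons n' \<subseteq> Mons n"
  unfolding Mons_def by auto

lemma Mons_free: assumes "a \<in> Mons n'" "n' < i" shows "lk a i = 0"
proof -
  have "i \<notin> ks a" using assms by (auto simp: Mons_def)
  then show ?thesis by (simp add: in_keys_iff)
qed

lemma Mon_mono: "n' \<le> n \<Longrightarrow> Mon n' d \<subseteq> Mon n d"
  unfolding Mon_def by auto

lemma Mon_Suc_free: assumes "a \<in> Mon (Suc n') d" "lk a (Suc n') = 0" shows "a \<in> Mon n' d"
proof -
  have "a \<in> Mons n'" using Mons_Suc_free[of a n'] assms Mon_Mons by blast
  then show ?thesis using assms(1) by (simp add: Mon_def Mons_def)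
qed

lemma lk_strip: "lk (a - sg n (lk a n)) i = (if i = n then 0 else lk a i)"
  by (simp add: lookup_minus lookup_single when_def)

lemma strip_decomp: "a = (a - sg n (lk a n)) + sg n (lk a n)"
  by (rule poly_mapping_eqI) (simp add: lookup_add lk_strip lookup_single when_def)

lemma mdeg_strip: "mdeg a = mdeg (a - sg n (lk a n)) + lk a n"
  by (subst strip_decomp[of a n]) (simp add: mdeg_add)

lemma count_up:
  assumes nn: "n = Suc n'" and V: "V \<subseteq> Mons n'"
  shows "card (Mon n d - up n V) \<le> (\<Sum>i\<le>d. card (Mon n' i - V))"
proof -
  define f where "f a = a - sg n (lk a n)" for a :: "nat \<Rightarrow>\<^sub>0 nat"
  have inj: "inj_on f (Mon n d)"
  proof (rule inj_onI)
    fix a b assume a: "a \<in> Mon n d" and b: "b \<in> Mon n d" and e: "f a = f b"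
    have "lk a n = lk b n" using mdeg_strip[of a n] mdeg_strip[of b n] a b e by (simp add: Mon_def f_def)
    then show "a = b" using strip_decomp[of a n] strip_decomp[of b n] e by (simp add: f_def)
  qed
  have img: "f ` (Mon n d - up n V) \<subseteq> (\<Union>i\<in>{..d}. Mon n' i - V)"
  proof
    fix x assume "x \<in> f ` (Mon n d - up n V)"
    then obtain a where a: "a \<in> Mon n d" "a \<notin> up n V" "x = f a" by auto
    have ks: "ks x \<subseteq> {1..n'}"
    proof
      fix i assume i: "i \<in> ks x"
      then have "i \<noteq> n" "i \<in> ks a" using a(3) by (auto simp: f_def in_keys_iff lk_strip split: if_splits)
      then show "i \<in> {1..n'}" using a(1) nn by (auto simp: Mon_def)
    qed
    have md: "mdeg x \<le> d" using mdeg_strip[of a n] a by (simp add: Mon_def f_def)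
    have "x \<notin> V"
    proof
      assume "x \<in> V"
      moreover have "dvm x a" using a(3) by (simp add: f_def dvm_def lk_strip)
      moreover have "a \<in> Mons n" using a(1) Mon_Mons by blast
      ultimately have "a \<in> up n V" by (auto simp: up_def)
      then show False using a(2) by simp
    qed
    then show "x \<in> (\<Union>i\<in>{..d}. Mon n' i - V)" using ks md by (auto simp: Mon_def)
  qed
  have "card (Mon n d - up n V) = card (f ` (Mon n d - up n V))"
    using inj by (intro card_image[symmetric]) (auto intro: inj_on_subset)
  also have "\<dots> \<le> card (\<Union>i\<in>{..d}. Mon n' i - V)"
    by (intro card_mono img) (auto simp: finite_Mon)
  also have "\<dots> \<le> (\<Sum>i\<le>d. card (Mon n' i - V))"
    by (rule card_UN_le) simp
  finally show ?thesis .
qed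

lemma times_monom_sg: "monom e * sg b c = (sg (e + b) c :: 'k::comm_ring_1 mpoly)"
  by (simp add: monom_def mult_single)

lemma lk_times_monom: "lk (monom e * f :: 'k::comm_ring_1 mpoly) (e + a) = lk f a"
proof -
  have "monom e * f = monom e * (\<Sum>b\<in>ks f. sg b (lk f b))" by (subst poly_decomp[of f]) (rule refl)
  also have "\<dots> = (\<Sum>b\<in>ks f. sg (e + b) (lk f b))" by (simp add: sum_distrib_left times_monom_sg)
  finally have "lk (monom e * f) (e + a) = (\<Sum>b\<in>ks f. lk (sg (e + b) (lk f b)) (e + a))"
    by (simp add: lookup_sum)
  also have "\<dots> = (\<Sum>b\<in>ks f. if b = a then lk f b else 0)"
    by (intro sum.cong) (auto simp: lookup_single when_def)
  also have "\<dots> = lk f a" by (simp add: sum.delta in_keys_iff)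
  finally show ?thesis .
qed

lemma en_decomp: "0 < lk a n \<Longrightarrow> sg n 1 + (a - sg n 1) = (a :: nat \<Rightarrow>\<^sub>0 nat)"
  by (rule poly_mapping_eqI) (auto simp: lookup_add lookup_minus lookup_single when_def)

lemma DEC:
  assumes g: "g \<in> (hom n (Suc d) :: 'k::comm_ring_1 mpoly set)"
  shows "\<exists>q\<in>hom n d. \<forall>a\<in>ks (g - monom (sg n 1) * q). a \<in> ks g \<and> lk a n = 0"
proof -
  let ?e = "sg n (1::nat)"
  define P where "P = {a\<in>ks g. 0 < lk a n}"
  define Z where "Z = {a\<in>ks g. lk a n = 0}"
  define q where "q = (\<Sum>a\<in>P. sg (a - ?e) (lk g a))"
  have fP: "finite P" "finite Z" by (simp_all add: P_def Z_def)
  have "monom ?e * q = (\<Sum>a\<in>P. sg (?e + (a - ?e)) (lk g a))"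
    by (simp add: q_def sum_distrib_left times_monom_sg)
  also have "\<dots> = (\<Sum>a\<in>P. sg a (lk g a))"
    by (intro sum.cong refl) (metis (mono_tags, lifting) P_def en_decomp mem_Collect_eq)
  finally have Xq: "monom ?e * q = (\<Sum>a\<in>P. sg a (lk g a))" .
  have "ks g = Z \<union> P" "Z \<inter> P = {}" by (auto simp: P_def Z_def)
  then have "g = (\<Sum>a\<in>Z. sg a (lk g a)) + (\<Sum>a\<in>P. sg a (lk g a))"
    using poly_decomp[of g] fP by (metis sum.union_disjoint)
  then have gX: "g - monom ?e * q = (\<Sum>a\<in>Z. sg a (lk g a))" using Xq by (metis add_diff_cancel_right')
  have k1: "ks (g - monom ?e * q) \<subseteq> Z"
  proof
    fix a assume "a \<in> ks (g - monom ?e * q)"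
    then have "a \<in> (\<Union>b\<in>Z. ks (sg b (lk g b)))" using gX keys_sum by fastforce
    then show "a \<in> Z" by (auto split: if_splits)
  qed
  have qh: "q \<in> hom n d"
  proof -
    have "ks q \<subseteq> Mon n d"
    proof
      fix b assume "b \<in> ks q"
      then have "b \<in> (\<Union>a\<in>P. ks (sg (a - ?e) (lk g a)))" using keys_sum unfolding q_def by fastforce
      then obtain a where a: "a \<in> P" "b = a - ?e" by (auto split: if_splits)
      have aM: "a \<in> Mon n (Suc d)" using a(1) g by (auto simp: P_def hom_def)
      have "ks b \<subseteq> ks a" using a(2) keys_minus_nat by blast
      moreover have "mdeg a = mdeg ?e + mdeg b"
        using en_decomp[of a n] a by (metis P_def mdeg_add mem_Collect_eq)
      ultimately show "b \<in> Mon n d" using aM by (auto simp: Mon_def)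
    qed
    then show ?thesis by (simp add: hom_def)
  qed
  show ?thesis using qh k1 by (auto simp: Z_def)
qed

lemma dvm_shift:
  assumes "lk s n = 0" "dvm s (a + sg n 1)" shows "dvm s a"
  unfolding dvm_def
proof
  fix i
  show "lk s i \<le> lk a i"
  proof (cases "i = n")
    case True then show ?thesis using assms(1) by simp
  next
    case False then show ?thesis using assms(2) by (simp add: dvm_def lookup_add lookup_single when_def) (metis add_0_right)
  qed
qed

context
  fixes n n' :: nat and h g :: "nat list" and V :: "(nat \<Rightarrow>\<^sub>0 nat) set"
  assumes nn: "n = Suc n'" and V: "upc n' V"
    and cV: "\<And>i. card (Mon n' i - V) \<le> hv g i"
    and HG: "\<And>d. (\<Sum>i\<le>d. hv g i) \<le> hv h d \<or> hv g d = 0"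
begin

lemma V_Mons: "V \<subseteq> Mons n"
  using upcD1[OF V] Mons_mono[of n' n] nn by auto

lemma U0_upc: "upc n (up n V)"
  by (rule upc_up)

lemma NT:
  assumes t: "t \<in> Tw n h (up n V) d"
  shows "0 < lk t n"
proof (rule ccontr)
  assume "\<not> 0 < lk t n"
  then have t0: "lk t n = 0" by simp
  let ?U = "Uw n h (up n V) d"
  have tM: "t \<in> Mon n d - ?U" using Tw_sub t by blast
  have fin: "finite (Tw n h (up n V) d)" using Tw_sub finite_Mon by (metis finite_Diff finite_subset)
  have "0 < card (Tw n h (up n V) d)" using fin t card_gt_0_iff by blast
  then have gt: "hv h d < card (Mon n d - ?U)" by (simp add: Tw_card)
  from HG[of d] show False
  proof
    assume s: "(\<Sum>i\<le>d. hv g i) \<le> hv h d"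
    have "up n V \<subseteq> ?U" using Uw_mono[of 0 d n h "up n V"] by simp
    then have "card (Mon n d - ?U) \<le> card (Mon n d - up n V)"
      by (intro card_mono) (auto simp: finite_Mon)
    also have "\<dots> \<le> (\<Sum>i\<le>d. card (Mon n' i - V))" by (rule count_up[OF nn upcD1[OF V]])
    also have "\<dots> \<le> (\<Sum>i\<le>d. hv g i)" by (intro sum_mono cV)
    finally show False using s gt by simp
  next
    assume "hv g d = 0"
    then have "card (Mon n' d - V) = 0" using cV[of d] by simp
    then have "Mon n' d - V = {}" by (simp add: finite_Mon)
    moreover have "t \<in> Mon n' d" using Mon_Suc_free[of t n' d] tM t0 nn by simp
    ultimately have "t \<in> V" by blast
    then have "t \<in> up n V" using sub_up[OF V_Mons] by blast
    then have "t \<in> ?U" using Uw_mono[of 0 d n h "up n V"] by auto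
    then show False using tM by blast
  qed
qed

lemma xfree:
  assumes "a \<in> Uw n h (up n V) d" "lk a n = 0" shows "a \<in> V"
  using assms(1)
proof (induction d)
  case 0
  then obtain s where s: "s \<in> V" "dvm s a" "a \<in> Mons n" by (auto simp: up_def)
  have aM: "a \<in> Mons n'" using Mons_Suc_free[of a n'] s(3) assms(2) nn by simp
  have "s + (a - s) \<in> V" using upcD2[OF V s(1) Mons_minus[OF aM]] .
  then show ?case using dvm_decomp[OF s(2)] by simp
next
  case (Suc d)
  show ?case
  proof (cases "a \<in> Uw n h (up n V) d")
    case True then show ?thesis by (rule Suc.IH)
  next
    case False
    then have "a \<in> up n (Tw n h (up n V) d)" using Suc.prems by (simp add: Uw_Suc)
    then obtain t where t: "t \<in> Tw n h (up n V) d" "dvm t a" by (auto simp: up_def)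
    have "lk t n \<le> lk a n" using t(2) by (simp add: dvm_def)
    then show ?thesis using NT[OF t(1)] assms(2) by simp
  qed
qed

lemma P2:
  "IU (Uinf n h (up n V)) \<subseteq> ideal_gen n (IU V \<union> {monom (sg n 1)} :: 'k::comm_ring_1 mpoly set)"
proof
  let ?K = "ideal_gen n (IU V \<union> {monom (sg n 1)} :: 'k mpoly set)"
  have enM: "sg n (1::nat) \<in> Mons n" using nn by (simp add: Mons_def)
  have Gsub: "IU V \<union> {monom (sg n 1)} \<subseteq> (polyring n :: 'k mpoly set)"
    using IU_polyring[OF V_Mons] enM by (auto simp: polyring_def Mons_def)
  have K: "is_ideal n ?K" by (rule ideal_gen_is_ideal[OF Gsub])
  have UM: "Uinf n h (up n V) \<subseteq> Mons n" using upcD1[OF Uinf_upc[OF U0_upc]] .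
  fix f :: "'k mpoly" assume f: "f \<in> IU (Uinf n h (up n V))"
  show "f \<in> ?K"
  proof (rule L0[OF K])
    fix a assume "a \<in> ks f"
    then have a: "a \<in> Uinf n h (up n V)" using f by (auto simp: IU_def)
    show "monom a \<in> ?K"
    proof (cases "lk a n = 0")
      case True
      then have "a \<in> V" using a xfree by (auto simp: Uinf_def)
      then have "(monom a :: 'k mpoly) \<in> IU V" by (simp add: monom_IU)
      then show ?thesis using ideal_gen_sub by blast
    next
      case False
      then have "a = sg n 1 + (a - sg n 1)" using en_decomp[of a n] by simp
      then have eq: "(monom a :: 'k mpoly) = monom (a - sg n 1) * monom (sg n 1)"
        by (metis add.commute monom_mult)
      have "(monom (a - sg n 1) :: 'k mpoly) \<in> polyring n"
        using Mons_minus[of a n "sg n 1"] a UM by (auto simp: polyring_def Mons_def)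
      moreover have "(monom (sg n 1) :: 'k mpoly) \<in> ?K" using ideal_gen_sub by blast
      ultimately show ?thesis using K eq by (simp add: is_ideal_def)
    qed
  qed
qed

lemma J_sub: "IU V \<subseteq> IU (Uinf n h (up n V))"
proof -
  have "V \<subseteq> Uinf n h (up n V)"
    using sub_up[OF V_Mons] Uw_Uinf[of n h "up n V" 0] by auto
  then show ?thesis by (auto simp: IU_def)
qed

lemma dich:
  assumes "a + sg n 1 \<in> Uw n h (up n V) D" "a \<notin> Uw n h (up n V) D" "a \<in> Mons n"
  shows "\<exists>i\<le>Suc (mdeg a). \<forall>b\<in>Mon n i. lk b n = 0 \<longrightarrow> b \<in> Uw n h (up n V) (Suc i)"
  using assms(1,2)
proof (induction D)
  case 0
  then obtain s where s: "s \<in> V" "dvm s (a + sg n 1)" by (auto simp: up_def)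
  have "lk s n = 0" using Mons_free[of s n' n] upcD1[OF V] s(1) nn by auto
  then have "dvm s a" using dvm_shift s(2) by blast
  then have "a \<in> up n V" using s(1) assms(3) by (auto simp: up_def)
  then show ?case using 0 by simp
next
  case (Suc D)
  let ?U = "Uw n h (up n V) D" and ?T = "Tw n h (up n V) D"
  have na: "a \<notin> ?U" "a \<notin> up n ?T" using Suc.prems(2) by (auto simp: Uw_Suc)
  show ?case
  proof (cases "a + sg n 1 \<in> ?U")
    case True then show ?thesis using Suc.IH na(1) by blast
  next
    case False
    then have "a + sg n 1 \<in> up n ?T" using Suc.prems(1) by (simp add: Uw_Suc)
    then obtain t where t: "t \<in> ?T" "dvm t (a + sg n 1)" by (auto simp: up_def)
    have tpos: "lk t n \<noteq> 0"
    proof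
      assume "lk t n = 0"
      then have "dvm t a" using dvm_shift t(2) by blast
      then have "a \<in> up n ?T" using t(1) assms(3) by (auto simp: up_def)
      then show False using na(2) by simp
    qed
    have tM: "t \<in> Mon n D - ?U" using Tw_sub t(1) by blast
    have "D = mdeg t" using tM by (simp add: Mon_def)
    also have "\<dots> \<le> mdeg (a + sg n 1)" by (rule mdeg_mono[OF t(2)])
    also have "\<dots> = Suc (mdeg a)" by (simp add: mdeg_add)
    finally have Dle: "D \<le> Suc (mdeg a)" .
    have "\<forall>b\<in>Mon n D. lk b n = 0 \<longrightarrow> b \<in> Uw n h (up n V) (Suc D)"
    proof (intro ballI impI)
      fix b assume b: "b \<in> Mon n D" "lk b n = 0"
      show "b \<in> Uw n h (up n V) (Suc D)"
      proof (cases "b \<in> ?U")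
        case True then show ?thesis by (simp add: Uw_Suc)
      next
        case False
        have gt: "revlex_gt b t" using revlex_xn[OF b(1) _ b(2)] tM tpos by simp
        have "b \<in> ?T" unfolding Tw_def
        proof (rule top_up)
          show "finite (Mon n D - ?U)" by (simp add: finite_Mon)
          show "sto revlex_gt (Mon n D - ?U)" by (rule sto_subset[OF sto_revlex]) blast
          show "t \<in> top revlex_gt (card (Mon n D - ?U) - hv h D) (Mon n D - ?U)" using t(1) by (simp add: Tw_def)
          show "b \<in> Mon n D - ?U" using b False by blast
          show "revlex_gt b t" by (rule gt)
        qed
        then show ?thesis using Tw_Uw by blast
      qed
    qed
    then show ?thesis using Dle by blast
  qed
qed

lemma P1:
  "WLE n (IU (Uinf n h (up n V)) :: 'k::field mpoly set) (monom (sg n 1))"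
  unfolding WLE_def
proof (intro conjI allI impI)
  let ?UI = "Uinf n h (up n V)"
  let ?X = "monom (sg n 1) :: 'k mpoly"
  have upcI: "upc n ?UI" by (rule Uinf_upc[OF U0_upc])
  show "?X \<in> hom n 1" using nn by (simp add: hom_def Mon_def)
  fix d :: nat
  show "maxrank n (IU ?UI) ?X d"
  proof (cases "\<forall>a\<in>Mon n d. a + sg n 1 \<in> ?UI \<longrightarrow> a \<in> ?UI")
    case True
    have "\<forall>f\<in>hom n d. ?X * f \<in> IU ?UI \<longrightarrow> f \<in> IU ?UI"
    proof (intro ballI impI)
      fix f :: "'k mpoly" assume f: "f \<in> hom n d" "?X * f \<in> IU ?UI"
      have "ks f \<subseteq> ?UI"
      proof
        fix a assume a: "a \<in> ks f"
        have "lk (?X * f) (sg n 1 + a) = lk f a" by (rule lk_times_monom)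
        then have "sg n 1 + a \<in> ks (?X * f)" using a by (simp add: in_keys_iff)
        then have "a + sg n 1 \<in> ?UI" using f(2) by (auto simp: IU_def add.commute)
        moreover have "a \<in> Mon n d" using a f(1) by (auto simp: hom_def)
        ultimately show "a \<in> ?UI" using True by blast
      qed
      then show "f \<in> IU ?UI" by (simp add: IU_def)
    qed
    then show ?thesis unfolding maxrank_def by blast
  next
    case False
    then obtain a where a: "a \<in> Mon n d" "a + sg n 1 \<in> ?UI" "a \<notin> ?UI" by blast
    then obtain D where D: "a + sg n 1 \<in> Uw n h (up n V) D" by (auto simp: Uinf_def)
    have "a \<notin> Uw n h (up n V) D" using a(3) Uw_Uinf by blast
    from dich[OF D this Mon_Mons[OF a(1)]] obtain i where
      i: "i \<le> Suc (mdeg a)" "\<forall>b\<in>Mon n i. lk b n = 0 \<longrightarrow> b \<in> Uw n h (up n V) (Suc i)" by blast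
    have md: "mdeg a = d" using a(1) by (simp add: Mon_def)
    have free: "c \<in> ?UI" if c: "c \<in> Mon n (Suc d)" "lk c n = 0" for c
    proof -
      have "i \<le> mdeg c" using i(1) md c(1) by (simp add: Mon_def)
      then obtain b where b: "dvm b c" "mdeg b = i" using down_exists by blast
      have "ks b \<subseteq> ks c"
      proof
        fix j assume "j \<in> ks b"
        then have "0 < lk b j" by (simp add: in_keys_iff)
        then have "0 < lk c j" using b(1) unfolding dvm_def by (meson less_le_trans)
        then show "j \<in> ks c" by (simp add: in_keys_iff)
      qed
      then have bM: "b \<in> Mon n i" using c(1) b(2) by (auto simp: Mon_def)
      have "lk b n = 0" using b(1) c(2) unfolding dvm_def by (metis le_zero_eq)
      then have "b \<in> Uw n h (up n V) (Suc i)" using i(2) bM by blast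
      then have bU: "b \<in> ?UI" using Uw_Uinf by blast
      have "c - b \<in> Mons n" using Mons_minus Mon_Mons[OF c(1)] by blast
      then have "b + (c - b) \<in> ?UI" using upcD2[OF upcI bU] by blast
      then show ?thesis using dvm_decomp[OF b(1)] by simp
    qed
    have "\<forall>g\<in>hom n (Suc d). \<exists>f\<in>hom n d. g - ?X * f \<in> IU ?UI"
    proof
      fix g :: "'k mpoly" assume g: "g \<in> hom n (Suc d)"
      from DEC[OF g] obtain q where q: "q \<in> hom n d" "\<forall>a\<in>ks (g - ?X * q). a \<in> ks g \<and> lk a n = 0" by blast
      have "ks (g - ?X * q) \<subseteq> ?UI"
      proof
        fix c assume "c \<in> ks (g - ?X * q)"
        then have "c \<in> ks g" "lk c n = 0" using q(2) by auto
        then show "c \<in> ?UI" using free g by (auto simp: hom_def)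
      qed
      then show "\<exists>f\<in>hom n d. g - ?X * f \<in> IU ?UI" using q(1) by (auto simp: IU_def)
    qed
    then show ?thesis unfolding maxrank_def by blast
  qed
qed

end

section \<open>Setting the last variable to zero\<close>

definition phi :: "nat \<Rightarrow> 'k::comm_ring_1 mpoly \<Rightarrow> 'k mpoly" where
  "phi n f = (\<Sum>a\<in>{a\<in>ks f. lk a n = 0}. sg a (lk f a))"

lemma lk_phi: "lk (phi n f) a = (if lk a n = 0 then lk f a else 0)"
proof -
  have "lk (phi n f) a = (\<Sum>b\<in>{b\<in>ks f. lk b n = 0}. if b = a then lk f b else 0)"
    unfolding phi_def lookup_sum by (intro sum.cong) (auto simp: lookup_single when_def)
  also have "\<dots> = (if a \<in> {b\<in>ks f. lk b n = 0} then lk f a else 0)"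
    by (simp add: sum.delta)
  also have "\<dots> = (if lk a n = 0 then lk f a else 0)" by (auto simp: in_keys_iff)
  finally show ?thesis .
qed

lemma phi_add: "phi n (f + g) = phi n f + phi n g"
  by (rule poly_mapping_eqI) (simp add: lk_phi lookup_add)

lemma phi_diff: "phi n (f - g) = phi n f - phi n g"
  by (rule poly_mapping_eqI) (simp add: lk_phi lookup_minus)

lemma phi_zero: "phi n 0 = 0"
  by (rule poly_mapping_eqI) (simp add: lk_phi)

lemma phi_id: assumes "\<And>a. a \<in> ks f \<Longrightarrow> lk a n = 0" shows "phi n f = f"
proof (rule poly_mapping_eqI)
  fix k show "lk (phi n f) k = lk f k"
  proof (cases "k \<in> ks f")
    case True then show ?thesis using assms by (simp add: lk_phi)
  next
    case False then show ?thesis by (simp add: lk_phi in_keys_iff)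
  qed
qed

lemma phi_vanish: assumes "\<And>a. a \<in> ks f \<Longrightarrow> 0 < lk a n" shows "phi n f = 0"
proof (rule poly_mapping_eqI)
  fix k show "lk (phi n f) k = lk 0 k"
  proof (cases "k \<in> ks f")
    case True then show ?thesis using assms[OF True] by (simp add: lk_phi)
  next
    case False then show ?thesis by (simp add: lk_phi in_keys_iff)
  qed
qed

lemma ks_phi: "a \<in> ks (phi n f) \<Longrightarrow> a \<in> ks f \<and> lk a n = 0"
  by (auto simp: lk_phi in_keys_iff split: if_splits)

lemma ks_rest: "a \<in> ks (f - phi n f) \<Longrightarrow> a \<in> ks f \<and> 0 < lk a n"
  by (auto simp: lk_phi in_keys_iff lookup_minus split: if_splits)

lemma keys_mult_pos_right:
  assumes "\<And>b. b \<in> ks y \<Longrightarrow> 0 < lk b n" "c \<in> ks (x * y :: 'k::comm_ring_1 mpoly)"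
  shows "0 < lk c n"
proof -
  obtain a b where "c = a + b" "a \<in> ks x" "b \<in> ks y" using keys_mult assms(2) by blast
  then show ?thesis using assms(1) by (simp add: lookup_add)
qed

lemma keys_mult_pos_left:
  assumes "\<And>b. b \<in> ks x \<Longrightarrow> 0 < lk b n" "c \<in> ks (x * y :: 'k::comm_ring_1 mpoly)"
  shows "0 < lk c n"
proof -
  obtain a b where "c = a + b" "a \<in> ks x" "b \<in> ks y" using keys_mult assms(2) by blast
  then show ?thesis using assms(1) by (simp add: lookup_add)
qed

lemma phi_mult: "phi n (r * f) = phi n r * (phi n f :: 'k::comm_ring_1 mpoly)"
proof -
  define r1 where "r1 = r - phi n r"
  define f1 where "f1 = f - phi n f"
  have r1: "\<And>a. a \<in> ks r1 \<Longrightarrow> 0 < lk a n" using ks_rest unfolding r1_def by blast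
  have f1: "\<And>a. a \<in> ks f1 \<Longrightarrow> 0 < lk a n" using ks_rest unfolding f1_def by blast
  have "r * f = phi n r * phi n f + (phi n r * f1 + r1 * f)"
    unfolding r1_def f1_def by (simp add: algebra_simps)
  then have "phi n (r * f) = phi n (phi n r * phi n f) + (phi n (phi n r * f1) + phi n (r1 * f))"
    by (simp add: phi_add)
  also have "phi n (phi n r * f1) = 0"
    by (rule phi_vanish) (rule keys_mult_pos_right[OF f1])
  also have "phi n (r1 * f) = 0"
    by (rule phi_vanish) (rule keys_mult_pos_left[OF r1])
  also have "phi n (phi n r * phi n f) = phi n r * phi n f"
  proof (rule phi_id)
    fix c assume "c \<in> ks (phi n r * phi n f)"
    then obtain a b where ab: "c = a + b" "a \<in> ks (phi n r)" "b \<in> ks (phi n f)" using keys_mult by blast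
    have "lk a n = 0" using ks_phi[OF ab(2)] by blast
    moreover have "lk b n = 0" using ks_phi[OF ab(3)] by blast
    ultimately show "lk c n = 0" using ab(1) by (simp add: lookup_add)
  qed
  finally show ?thesis by simp
qed

lemma hom_polyring: "hom n d \<subseteq> polyring n"
  by (auto simp: hom_def polyring_def Mon_def)

lemma polyring_mono: assumes "n' \<le> n" shows "polyring n' \<subseteq> polyring n"
proof -
  have "{1..n'} \<subseteq> {1..n}" using assms by auto
  then show ?thesis unfolding polyring_def by blast
qed

lemma hom_mono: "n' \<le> n \<Longrightarrow> hom n' d \<subseteq> hom n d"
  using Mon_mono by (fastforce simp: hom_def)

lemma polyring_free: "f \<in> polyring n' \<Longrightarrow> a \<in> ks f \<Longrightarrow> lk a (Suc n') = 0"
  using Mons_free[of a n' "Suc n'"] by (auto simp: polyring_def Mons_def)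

lemma phi_polyring:
  assumes "f \<in> polyring (Suc n')" shows "phi (Suc n') f \<in> polyring n'"
proof -
  have "\<forall>a\<in>ks (phi (Suc n') f). ks a \<subseteq> {1..n'}"
  proof
    fix a assume "a \<in> ks (phi (Suc n') f)"
    then have "a \<in> ks f" "lk a (Suc n') = 0" using ks_phi by blast+
    then have "a \<in> Mons (Suc n')" using assms by (auto simp: polyring_def Mons_def)
    then have "a \<in> Mons n'" using Mons_Suc_free \<open>lk a (Suc n') = 0\<close> by blast
    then show "ks a \<subseteq> {1..n'}" by (simp add: Mons_def)
  qed
  then show ?thesis by (simp add: polyring_def)
qed

lemma phi_hom:
  assumes "f \<in> hom (Suc n') d" shows "phi (Suc n') f \<in> hom n' d"
proof -
  have "ks (phi (Suc n') f) \<subseteq> Mon n' d"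
  proof
    fix a assume "a \<in> ks (phi (Suc n') f)"
    then have "a \<in> ks f" "lk a (Suc n') = 0" using ks_phi by blast+
    then show "a \<in> Mon n' d" using assms Mon_Suc_free by (auto simp: hom_def)
  qed
  then show ?thesis by (simp add: hom_def)
qed

lemma transfer_WLE:
  assumes nn: "n = Suc n'" and B: "B \<subseteq> (polyring n' :: 'k::field mpoly set)"
    and L: "WLE n' (ideal_gen n' B) L"
  shows "WLE n (ideal_gen n (B \<union> {monom (sg n 1)})) L"
proof -
  let ?X = "monom (sg n 1) :: 'k mpoly"
  let ?K = "ideal_gen n (B \<union> {?X})"
  let ?J = "ideal_gen n' B"
  have Xp: "?X \<in> polyring n" using nn by (simp add: polyring_def)
  have Bp: "B \<subseteq> polyring n" using B polyring_mono[of n' n] nn by auto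
  have K: "is_ideal n ?K" by (rule ideal_gen_is_ideal) (use Xp Bp in blast)
  have J: "is_ideal n' ?J" by (rule ideal_gen_is_ideal[OF B])
  have Lh: "L \<in> hom n' 1" using L by (simp add: WLE_def)
  have Lp: "L \<in> polyring n'" using Lh hom_polyring by blast
  have phiL: "phi n L = L" using polyring_free[OF Lp] nn by (intro phi_id) simp
  have phi_free: "phi n f = f" if "f \<in> polyring n'" for f :: "'k mpoly"
    using polyring_free[OF that] nn by (intro phi_id) simp
  \<comment> \<open>K is characterised by phi\<close>
  define K0 where "K0 = {f \<in> polyring n. phi n f \<in> ?J}"
  have K0: "is_ideal n K0"
    unfolding is_ideal_def
  proof (intro conjI ballI)
    show "K0 \<subseteq> polyring n" by (auto simp: K0_def)
    show "0 \<in> K0" by (simp add: K0_def phi_zero zero_in_gen polyring_def)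
  next
    fix f g :: "'k mpoly" assume "f \<in> K0" "g \<in> K0"
    then show "f + g \<in> K0" using J polyring_add by (auto simp: K0_def phi_add is_ideal_def)
  next
    fix r f :: "'k mpoly" assume r: "r \<in> polyring n" and f: "f \<in> K0"
    have "phi n r \<in> polyring n'" using phi_polyring[of r n'] r nn by simp
    then have "phi n r * phi n f \<in> ?J" using f J by (auto simp: K0_def is_ideal_def)
    then show "r * f \<in> K0" using r f polyring_mult by (auto simp: K0_def phi_mult)
  qed
  have KK0: "?K \<subseteq> K0"
  proof (rule ideal_gen_min[OF K0])
    show "B \<union> {?X} \<subseteq> K0"
    proof
      fix b :: "'k mpoly" assume "b \<in> B \<union> {?X}"
      then show "b \<in> K0"
      proof
        assume b: "b \<in> B"
        then have "phi n b = b" using phi_free B by blast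
        then show "b \<in> K0" using b Bp ideal_gen_sub[of B n'] by (auto simp: K0_def)
      next
        assume "b \<in> {?X}"
        then have "b = ?X" by simp
        moreover have "phi n ?X = 0" by (rule phi_vanish) simp
        ultimately show "b \<in> K0" using Xp by (simp add: K0_def zero_in_gen)
      qed
    qed
  qed
  have JK0: "?J \<subseteq> ?K \<inter> polyring n'"
  proof (rule ideal_gen_min)
    have a1: "?K \<inter> polyring n' \<subseteq> polyring n'" by blast
    have a2: "0 \<in> ?K \<inter> polyring n'" using zero_in_gen by (auto simp: polyring_def)
    have a3: "f + g \<in> ?K \<inter> polyring n'" if "f \<in> ?K \<inter> polyring n'" "g \<in> ?K \<inter> polyring n'" for f g :: "'k mpoly"
      using that K polyring_add by (auto simp: is_ideal_def)
    have a4: "r * f \<in> ?K \<inter> polyring n'" if r: "r \<in> polyring n'" and f: "f \<in> ?K \<inter> polyring n'" for r f :: "'k mpoly"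
    proof -
      have "r \<in> polyring n" using r polyring_mono[of n' n] nn by auto
      then show ?thesis using K f r polyring_mult by (auto simp: is_ideal_def)
    qed
    show "is_ideal n' (?K \<inter> polyring n')"
      unfolding is_ideal_def using a1 a2 a3 a4 by blast
    show "B \<subseteq> ?K \<inter> polyring n'" using B Bp ideal_gen_sub by blast
  qed
  then have JK: "?J \<subseteq> ?K" by blast
  have K0K: "K0 \<subseteq> ?K"
  proof
    fix f :: "'k mpoly" assume f: "f \<in> K0"
    then have fp: "f \<in> polyring n" and pf: "phi n f \<in> ?J" by (auto simp: K0_def)
    have "f - phi n f \<in> ?K"
    proof (rule L0[OF K])
      fix a assume a: "a \<in> ks (f - phi n f)"
      then have aks: "a \<in> ks f" and pos: "0 < lk a n" using ks_rest by blast+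
      have aM: "a \<in> Mons n" using aks fp by (auto simp: polyring_def Mons_def)
      have "a = sg n 1 + (a - sg n 1)" using en_decomp[of a n] pos by simp
      then have eq: "(monom a :: 'k mpoly) = monom (a - sg n 1) * ?X"
        by (metis add.commute monom_mult)
      have "(monom (a - sg n 1) :: 'k mpoly) \<in> polyring n"
        using Mons_minus[OF aM] by (auto simp: polyring_def Mons_def)
      moreover have "?X \<in> ?K" using ideal_gen_sub by blast
      ultimately show "monom a \<in> ?K" using K eq by (simp add: is_ideal_def)
    qed
    moreover have "phi n f \<in> ?K" using pf JK by blast
    ultimately have "phi n f + (f - phi n f) \<in> ?K" using K unfolding is_ideal_def by blast
    then show "f \<in> ?K" by simp
  qed
  have KE: "f \<in> ?K \<longleftrightarrow> phi n f \<in> ?J" if "f \<in> polyring n" for f :: "'k mpoly"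
    using KK0 K0K that by (auto simp: K0_def)
  show ?thesis
    unfolding WLE_def
  proof (intro conjI allI impI)
    show "L \<in> hom n 1" using Lh hom_mono[of n' n] nn by auto
    fix d :: nat assume d: "1 \<le> d"
    have mr: "maxrank n' ?J L d" using L d by (simp add: WLE_def)
    show "maxrank n ?K L d"
      using mr unfolding maxrank_def
    proof
      assume inj: "\<forall>f\<in>hom n' d. L * f \<in> ?J \<longrightarrow> f \<in> ?J"
      have "\<forall>f\<in>hom n d. L * f \<in> ?K \<longrightarrow> f \<in> ?K"
      proof (intro ballI impI)
        fix f :: "'k mpoly" assume f: "f \<in> hom n d" "L * f \<in> ?K"
        have fp: "f \<in> polyring n" using f(1) hom_polyring by blast
        have Lfp: "L * f \<in> polyring n" using polyring_mult[OF _ fp] Lp polyring_mono[of n' n] nn by auto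
        have "phi n (L * f) \<in> ?J" using KE[OF Lfp] f(2) by blast
        then have "L * phi n f \<in> ?J" by (simp add: phi_mult phiL)
        moreover have "phi n f \<in> hom n' d" using phi_hom[of f n' d] f(1) nn by simp
        ultimately have "phi n f \<in> ?J" using inj by blast
        then show "f \<in> ?K" using KE[OF fp] by blast
      qed
      then show "(\<forall>f\<in>hom n d. L * f \<in> ?K \<longrightarrow> f \<in> ?K) \<or>
        (\<forall>g\<in>hom n (Suc d). \<exists>f\<in>hom n d. g - L * f \<in> ?K)" by blast
    next
      assume sur: "\<forall>g\<in>hom n' (Suc d). \<exists>f\<in>hom n' d. g - L * f \<in> ?J"
      have "\<forall>g\<in>hom n (Suc d). \<exists>f\<in>hom n d. g - L * f \<in> ?K"
      proof
        fix g :: "'k mpoly" assume g: "g \<in> hom n (Suc d)"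
        have "phi n g \<in> hom n' (Suc d)" using phi_hom[of g n' "Suc d"] g nn by simp
        then obtain q where q: "q \<in> hom n' d" "phi n g - L * q \<in> ?J" using sur by blast
        have qp: "q \<in> polyring n'" using q(1) hom_polyring by blast
        have Lqp: "L * q \<in> polyring n'" by (rule polyring_mult[OF Lp qp])
        have gp: "g \<in> polyring n" using g hom_polyring by blast
        have gLq: "g - L * q \<in> polyring n"
          using polyring_diff[OF gp] Lqp polyring_mono[of n' n] nn by auto
        have "phi n (g - L * q) = phi n g - L * q" using phi_free[OF Lqp] by (simp add: phi_diff)
        then have "g - L * q \<in> ?K" using KE[OF gLq] q(2) by simp
        moreover have "q \<in> hom n d" using q(1) hom_mono[of n' n] nn by auto
        ultimately show "\<exists>f\<in>hom n d. g - L * f \<in> ?K" by blast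
      qed
      then show "(\<forall>f\<in>hom n d. L * f \<in> ?K \<longrightarrow> f \<in> ?K) \<or>
        (\<forall>g\<in>hom n (Suc d). \<exists>f\<in>hom n d. g - L * f \<in> ?K)" by blast
    qed
  qed
qed

lemma trivial0: "mWLP 0 (I :: 'k::field mpoly set) m"
  unfolding mWLP_def
proof (intro exI[of _ "replicate m 0"] conjI allI impI)
  show "length (replicate m (0 :: 'k mpoly)) = m" by simp
  fix i assume i: "i < m"
  let ?J = "ideal_gen 0 (I \<union> set (take i (replicate m (0 :: 'k mpoly))))"
  have "replicate m (0 :: 'k mpoly) ! i = 0" using i by simp
  moreover have "WLE 0 ?J 0"
    unfolding WLE_def
  proof (intro conjI allI impI)
    show "(0 :: 'k mpoly) \<in> hom 0 1" by (simp add: hom_def)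
    fix d :: nat assume d: "1 \<le> d"
    have "Mon 0 d = {}"
    proof (rule ccontr)
      assume "Mon 0 d \<noteq> {}"
      then obtain a where a: "a \<in> Mon 0 d" by blast
      then have "ks a = {}" by (auto simp: Mon_def)
      then have "a = 0" by simp
      then show False using a d by (simp add: Mon_def)
    qed
    then have "\<forall>f\<in>(hom 0 d :: 'k mpoly set). f = 0" by (simp add: hom_def)
    then have "\<forall>f\<in>(hom 0 d :: 'k mpoly set). (0::'k mpoly) * f \<in> ?J \<longrightarrow> f \<in> ?J"
      using zero_in_gen[of 0 "I \<union> set (take i (replicate m (0 :: 'k mpoly)))"] by auto
    then show "maxrank 0 ?J 0 d" unfolding maxrank_def by blast
  qed
  ultimately show "WLE 0 ?J (replicate m 0 ! i)" by simp
qed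

lemma gen_eq:
  assumes "A \<subseteq> polyring n" "C \<subseteq> polyring n" "A \<subseteq> ideal_gen n C" "C \<subseteq> ideal_gen n A"
  shows "ideal_gen n A = (ideal_gen n C :: 'k::comm_ring_1 mpoly set)"
proof
  show "ideal_gen n A \<subseteq> ideal_gen n C" by (rule ideal_gen_min[OF ideal_gen_is_ideal[OF assms(2)] assms(3)])
  show "ideal_gen n C \<subseteq> ideal_gen n A" by (rule ideal_gen_min[OF ideal_gen_is_ideal[OF assms(1)] assms(4)])
qed

lemma W_Suc_eq:
  assumes "n' \<le> hv h 1" "upc n' V" "(W m (Delta h) :: 'k::field mpoly set) = IU V"
  shows "(W (Suc m) h :: 'k mpoly set) = IU (Uinf (hv h 1) h (up (hv h 1) V))"
proof -
  let ?n = "hv h 1"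
  have VM: "V \<subseteq> Mons ?n" using upcD1[OF assms(2)] Mons_mono[OF assms(1)] by blast
  have g: "ideal_gen ?n (IU V :: 'k mpoly set) = IU (up ?n V)"
  proof (rule G1[OF VM])
    show "monom ` V \<subseteq> (IU V :: 'k mpoly set)" by (auto simp: IU_def)
    show "(IU V :: 'k mpoly set) \<subseteq> IU (up ?n V)" using sub_up[OF VM] by (auto simp: IU_def)
  qed
  have "(W (Suc m) h :: 'k mpoly set) = (\<Union>d. wstage ?n h (ideal_gen ?n (W m (Delta h))) d)"
    by (simp add: Let_def)
  also have "\<dots> = (\<Union>d. wstage ?n h (IU (up ?n V)) d)" using assms(3) g by simp
  also have "\<dots> = IU (Uinf ?n h (up ?n V))" by (rule stages_Uinf[OF upc_up])
  finally show ?thesis .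
qed

lemma Inv:
  "WLseq TYPE('k::field) m h \<Longrightarrow>
    \<exists>U. upc (hv h 1) U \<and> (W m h :: 'k mpoly set) = IU U \<and> (\<forall>j. card (Mon (hv h 1) j - U) \<le> hv h j)"
proof (induction m arbitrary: h)
  case 0
  let ?N = "hv h 1"
  let ?S = "\<Union>d. top lex_gt (card (Mon ?N d) - hv h d) (Mon ?N d)"
  show ?case
  proof (intro exI conjI allI)
    show "upc ?N (up ?N ?S)" by (rule upc_up)
    show "(W 0 h :: 'k mpoly set) = IU (up ?N ?S)" using Lex_eq[of h] by simp
    fix j show "card (Mon ?N j - up ?N ?S) \<le> hv h j" by (rule Lex_count)
  qed
next
  case (Suc m)
  then have O: "Oseq TYPE('k) h" and un: "unimodal h" and wl: "WLseq TYPE('k) m (Delta h)" by auto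
  from un obtain k where k: "unimodal_at h k" by (auto simp: unimodal_def)
  have h0: "h ! 0 = 1" using O by (simp add: Oseq_def)
  have d1: "hv (Delta h) 1 = hv h 1 - 1" by (rule hv_Delta1[OF k h0])
  from Suc.IH[OF wl] obtain V where V: "upc (hv (Delta h) 1) V" "(W m (Delta h) :: 'k mpoly set) = IU V" by blast
  have WE: "(W (Suc m) h :: 'k mpoly set) = IU (Uinf (hv h 1) h (up (hv h 1) V))"
    by (rule W_Suc_eq[OF _ V(1) V(2)]) (metis d1 diff_le_self)
  show ?case
    using WE Uinf_upc[OF upc_up] Uinf_count by blast
qed

lemma step:
  assumes wl: "WLseq TYPE('k::field) (Suc m) h"
    and Ls': "\<exists>Ls'. length Ls' = m \<and> (\<forall>i<m. WLE (hv (Delta h) 1)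
       (ideal_gen (hv (Delta h) 1) ((W m (Delta h) :: 'k mpoly set) \<union> set (take i Ls'))) (Ls' ! i))"
  shows "mWLP (hv h 1) (W (Suc m) h :: 'k mpoly set) (Suc m)"
proof -
  have O: "Oseq TYPE('k) h" and un: "unimodal h" and wl': "WLseq TYPE('k) m (Delta h)" using wl by auto
  from un obtain k where k: "unimodal_at h k" by (auto simp: unimodal_def)
  have h0: "h ! 0 = 1" using O by (simp add: Oseq_def)
  define n where "n = hv h 1"
  show ?thesis
  proof (cases "n = 0")
    case True then show ?thesis using trivial0 by (simp add: n_def)
  next
    case False
    then obtain n' where nn: "n = Suc n'" by (cases n) auto
    have d1: "hv (Delta h) 1 = n'" using hv_Delta1[OF k h0] nn by (simp add: n_def)
    from Inv[OF wl'] obtain V where V: "upc n' V" "(W m (Delta h) :: 'k mpoly set) = IU V"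
      and cV: "\<And>j. card (Mon n' j - V) \<le> hv (Delta h) j" using d1 by auto
    have HG: "\<And>d. (\<Sum>i\<le>d. hv (Delta h) i) \<le> hv h d \<or> hv (Delta h) d = 0" by (rule HG_Delta[OF k h0])
    let ?UI = "Uinf n h (up n V)"
    let ?X = "monom (sg n 1) :: 'k mpoly"
    have WE: "(W (Suc m) h :: 'k mpoly set) = IU ?UI"
      unfolding n_def by (rule W_Suc_eq[OF _ V(1) V(2)]) (metis nn n_def le_SucI order_refl)
    have P1: "WLE n (IU ?UI :: 'k mpoly set) ?X" by (rule P1[OF nn V(1) cV HG])
    have P2: "IU ?UI \<subseteq> ideal_gen n (IU V \<union> {?X})" by (rule P2[OF nn V(1) cV HG])
    have Jsub: "IU V \<subseteq> (IU ?UI :: 'k mpoly set)" by (rule J_sub[OF nn V(1) cV HG])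
    have upcUI: "upc n ?UI" by (rule Uinf_upc[OF upc_up])
    have UIp: "(IU ?UI :: 'k mpoly set) \<subseteq> polyring n" by (rule IU_polyring[OF upcD1[OF upcUI]])
    have Vp: "(IU V :: 'k mpoly set) \<subseteq> polyring n'" by (rule IU_polyring[OF upcD1[OF V(1)]])
    have pmono: "polyring n' \<subseteq> (polyring n :: 'k mpoly set)" using polyring_mono[of n' n] nn by simp
    have Xp: "?X \<in> polyring n" using nn by (simp add: polyring_def)
    from Ls' obtain Ls' where len: "length Ls' = m"
      and LW: "\<forall>i<m. WLE n' (ideal_gen n' ((IU V :: 'k mpoly set) \<union> set (take i Ls'))) (Ls' ! i)"
      using V(2) d1 by auto
    have Lp: "set (take j Ls') \<subseteq> polyring n'" for j
    proof
      fix x assume "x \<in> set (take j Ls')"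
      then obtain l where l: "l < length (take j Ls')" "x = take j Ls' ! l" by (auto simp: in_set_conv_nth)
      then have "l < m" "x = Ls' ! l" using len by auto
      then have "x \<in> hom n' 1" using LW by (simp add: WLE_def)
      then show "x \<in> polyring n'" using hom_polyring by blast
    qed
    show ?thesis
      unfolding mWLP_def WE n_def[symmetric]
    proof (intro exI[of _ "?X # Ls'"] conjI allI impI)
      show "length (?X # Ls') = Suc m" using len by simp
      fix i assume i: "i < Suc m"
      show "WLE n (ideal_gen n (IU ?UI \<union> set (take i (?X # Ls')))) ((?X # Ls') ! i)"
      proof (cases i)
        case 0
        have "ideal_gen n (IU ?UI :: 'k mpoly set) = IU ?UI" by (rule gen_IU[OF upcUI])
        then show ?thesis using P1 0 by simp
      next
        case (Suc j)
        then have j: "j < m" using i by simp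
        let ?B = "(IU V :: 'k mpoly set) \<union> set (take j Ls')"
        have Bp: "?B \<subseteq> polyring n'" using Vp Lp by blast
        have T: "WLE n (ideal_gen n (?B \<union> {?X})) (Ls' ! j)"
          by (rule transfer_WLE[OF nn Bp]) (use LW j in blast)
        have eq: "ideal_gen n (IU ?UI \<union> set (take i (?X # Ls'))) = ideal_gen n (?B \<union> {?X})"
        proof (rule gen_eq)
          show "IU ?UI \<union> set (take i (?X # Ls')) \<subseteq> polyring n"
            using UIp Xp Lp[of j] pmono Suc by auto
          show "?B \<union> {?X} \<subseteq> polyring n" using Bp pmono Xp by blast
          have "IU ?UI \<subseteq> ideal_gen n (?B \<union> {?X})"
            using P2 ideal_gen_mono[of "?B \<union> {?X}" n "IU V \<union> {?X}"] Bp pmono Xp by blast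
          moreover have "?B \<union> {?X} \<subseteq> ideal_gen n (?B \<union> {?X})" by (rule ideal_gen_sub)
          ultimately show "IU ?UI \<union> set (take i (?X # Ls')) \<subseteq> ideal_gen n (?B \<union> {?X})"
            using Suc by auto
          have "?B \<union> {?X} \<subseteq> IU ?UI \<union> set (take i (?X # Ls'))" using Jsub Suc by auto
          then show "?B \<union> {?X} \<subseteq> ideal_gen n (IU ?UI \<union> set (take i (?X # Ls')))"
            using ideal_gen_sub by blast
        qed
        show ?thesis using T eq Suc by simp
      qed
    qed
  qed
qed

lemma main: "WLseq TYPE('k::field) (Suc m) h \<Longrightarrow> mWLP (hv h 1) (W (Suc m) h :: 'k mpoly set) (Suc m)"
proof (induction m arbitrary: h)
  case 0
  then show ?case by (rule step) simp
next
  case (Suc m)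
  have "WLseq TYPE('k) (Suc m) (Delta h)" using Suc.prems by simp
  then have "mWLP (hv (Delta h) 1) (W (Suc m) (Delta h) :: 'k mpoly set) (Suc m)" by (rule Suc.IH)
  then show ?case by (intro step[OF Suc.prems]) (simp add: mWLP_def)
qed

theorem proposition3p2:
  fixes h :: "nat list" and m :: nat
  assumes "1 \<le> m"
    and "WLseq TYPE('k::field_char_0) m h"
  shows "mWLP (hv h 1) (W m h :: 'k mpoly set) m"
proof -
  obtain m' where "m = Suc m'" using assms(1) by (cases m) auto
  then show ?thesis using main assms(2) by simp
qed

end
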